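(* Consider Algorithm GEN with parameter $t_0$ on an instance satisfying the standing assumption, with an edge labeling as in the context. Let $u,v$ be the two offline neighbors of a second-class online type, and let $t\in[0,1]$. Then $\bar g(t)/\bar g_{u,v}(t)\le 1$.
   Context: **Model.** Poisson arrival model. Each online type $i$ independently arrives according to a Poisson process of rate $\lambda_i$ on $[0,1]$. On arrival, a vertex is immediately and irrevocably matched to an unmatched offline neighbor or discarded. Each offline vertex is matched at most once. The instance is a bipartite graph $(I,J,E)$ with rates $\lambda_i>0$. **Standing assumption.** There are values $x_{ij}\ge0$ (an optimal Jaillet–Lu LP solution) with $\sum_i x_{ij}=1$ for every $j\in J$, and every type is one of two kinds: - first-class: exactly one neighbor $j$, with $x_{ij}=\lambda_i$; - second-class: exactly two neighbors $j_1,j_2$, with $x_{ij_1}=x_{ij_2}=\lambda_i/2$. **Labeling.** Each edge is labeled first-class or second-class. All edges of first-class types are labeled first-class. For every $j$, the sum of $x_{ij}$ over first-class-labeled edges at $j$ equals $1-\ln 2$, so second-class-labeled edges at $j$ have total $x$-value $\ln 2$. **Reference process.** $H$ is the instance with offline vertices $a,b$; a type of rate $2\ln2$ adjacent to both; and a type of rate $1-\ln2$ adjacent only to $a$ and another adjacent only to $b$. Algorithm RES with parameter $t_0$ works as follows: - single-neighbor arrivals are matched if their neighbor is unmatched; - a two-neighbor arrival at time $t>t_0$ with some unmatched neighbor is matched to a uniformly random unmatched neighbor. On $H$ under RES, $f(t)$ is the probability that a given offline vertex is matched by time $t$, $g(t)$ is the probability both are, and $\bar g=1-g$. **Algorithm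 GEN (parameter $t_0$).** For offline $u,v$, $g_{u,v}(t)$ is the probability, under GEN, that both are matched by time $t$, and $\bar g_{u,v}=1-g_{u,v}$. Edges are used only if their offline endpoint is unmatched. - A first-class arrival is matched to its neighbor if possible. - A second-class arrival of type $i$ with neighbors $u,v$ chooses at most one edge, with disjoint probabilities: - each first-class-labeled edge $(i,u)$ with probability $1/2$; - if the arrival time is $t>t_0$, each second-class-labeled edge $(i,u)$ with probability $\bar g(t)/(2\bar g_{u,v}(t))$ if $v$ is unmatched, or $\bar g(t)/\bar g_{u,v}(t)$ if $v$ is matched. *)

theory Defs
  imports "HOL-Analysis.Analysis"
begin

text \<open>The state of an online matching process is the set S of matched offline
vertices.  An online algorithm that decides only from the arrival type, the
arrival time and the current state yields a continuous-time Markov chain on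
subsets of J; r t S w is the rate (at time t, in state S, with w not in S) at which
w becomes matched.  P t S is the probability that the matched set at time t
is exactly S.  We describe P by the (integrated) Kolmogorov forward equations
on the horizon [0,1], starting from the empty matching.\<close>

definition matched_process ::
  "'j set \<Rightarrow> (real \<Rightarrow> 'j set \<Rightarrow> 'j \<Rightarrow> real) \<Rightarrow> (real \<Rightarrow> 'j set \<Rightarrow> real) \<Rightarrow> bool" where
  "matched_process J r P \<longleftrightarrow>
     (\<forall>S. P 0 S = (if S = {} then 1 else 0)) \<and>
     (\<forall>S. S \<subseteq> J \<longrightarrow> (\<forall>t\<in>{0..1}.
        ((\<lambda>s. (\<Sum>w\<in>S. P s (S - {w}) * r s (S - {w}) w)
              - P s S * (\<Sum>w\<in>J - S. r s S w))
          has_integral (P t S - P 0 S)) {0..t}))"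

definition both_matched :: "'j set \<Rightarrow> (real \<Rightarrow> 'j set \<Rightarrow> real) \<Rightarrow> real \<Rightarrow> 'j \<Rightarrow> 'j \<Rightarrow> real" where
  "both_matched J P t u v = (\<Sum>S\<in>{S. S \<subseteq> J \<and> u \<in> S \<and> v \<in> S}. P t S)"

text \<open>Instance: online types I with neighbourhoods N i and rates lam i.
RES: single-neighbour arrivals match their neighbour if unmatched; a
two-neighbour arrival at time t > t0 with some unmatched neighbour is matched
to a uniformly random unmatched neighbour.\<close>
definition RES_rate ::
  "'i set \<Rightarrow> ('i \<Rightarrow> 'j set) \<Rightarrow> ('i \<Rightarrow> real) \<Rightarrow> real \<Rightarrow> real \<Rightarrow> 'j set \<Rightarrow> 'j \<Rightarrow> real" where
  "RES_rate I N lam t0 t S w =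
     (\<Sum>i\<in>{i\<in>I. w \<in> N i}. lam i *
        (if card (N i) = 1 then 1
         else if card (N i) = 2 \<and> t > t0 then (if N i - {w} \<subseteq> S then 1 else 1/2)
         else 0))"

text \<open>H: offline vertices a = 0, b = 1; type 0 of rate 2 ln 2 adjacent to both,
type 1 of rate 1 - ln 2 adjacent to a only, type 2 of rate 1 - ln 2 adjacent to b only.\<close>
definition H_I :: "nat set" where "H_I = {0, 1, 2}"
definition H_J :: "nat set" where "H_J = {0, 1}"
definition H_N :: "nat \<Rightarrow> nat set" where
  "H_N i = (if i = 0 then {0, 1} else if i = 1 then {0} else {1})"
definition H_lam :: "nat \<Rightarrow> real" where
  "H_lam i = (if i = 0 then 2 * ln 2 else 1 - ln 2)"

text \<open>Rate at which w becomes matched under GEN in state S at time t.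
gbar is the function 1 - g of the reference process; P is GEN's own
distribution (GEN is self-referential through g_{u,v}).  lab i w = True means
the edge (i,w) is labelled first-class.  For a second-class type i the other
neighbour v of w ranges over the singleton N i - {w}.\<close>
definition GEN_rate ::
  "'i set \<Rightarrow> 'j set \<Rightarrow> ('i \<Rightarrow> 'j set) \<Rightarrow> ('i \<Rightarrow> real) \<Rightarrow> ('i \<Rightarrow> 'j \<Rightarrow> bool) \<Rightarrow> real \<Rightarrow>
   (real \<Rightarrow> real) \<Rightarrow> (real \<Rightarrow> 'j set \<Rightarrow> real) \<Rightarrow> real \<Rightarrow> 'j set \<Rightarrow> 'j \<Rightarrow> real" where
  "GEN_rate I J N lam lab t0 gbar P t S w =
     (\<Sum>i\<in>{i\<in>I. w \<in> N i}. lam i *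
        (if card (N i) = 1 then 1
         else (\<Sum>v\<in>N i - {w}.
                 if lab i w then 1/2
                 else if t > t0 then
                   (if v \<in> S then gbar t / (1 - both_matched J P t w v)
                    else gbar t / (2 * (1 - both_matched J P t w v)))
                 else 0)))"

definition standing_instance ::
  "'i set \<Rightarrow> 'j set \<Rightarrow> ('i \<Rightarrow> 'j set) \<Rightarrow> ('i \<Rightarrow> real) \<Rightarrow> ('i \<Rightarrow> 'j \<Rightarrow> real) \<Rightarrow> bool" where
  "standing_instance I J N lam x \<longleftrightarrow>
     finite I \<and> finite J \<and>
     (\<forall>i\<in>I. N i \<subseteq> J \<and> lam i > 0) \<and>
     (\<forall>i\<in>I. \<forall>j\<in>N i. x i j \<ge> 0) \<and>
     (\<forall>j\<in>J. (\<Sum>i\<in>{i\<in>I. j \<in> N i}. x i j) = 1) \<and>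
     (\<forall>i\<in>I. (card (N i) = 1 \<and> (\<forall>j\<in>N i. x i j = lam i)) \<or>
             (card (N i) = 2 \<and> (\<forall>j\<in>N i. x i j = lam i / 2)))"

definition valid_labeling ::
  "'i set \<Rightarrow> 'j set \<Rightarrow> ('i \<Rightarrow> 'j set) \<Rightarrow> ('i \<Rightarrow> 'j \<Rightarrow> real) \<Rightarrow> ('i \<Rightarrow> 'j \<Rightarrow> bool) \<Rightarrow> bool" where
  "valid_labeling I J N x lab \<longleftrightarrow>
     (\<forall>i\<in>I. card (N i) = 1 \<longrightarrow> (\<forall>j\<in>N i. lab i j)) \<and>
     (\<forall>j\<in>J. (\<Sum>i\<in>{i\<in>I. j \<in> N i \<and> lab i j}. x i j) = 1 - ln 2)"

end

theory Submission
  imports Defs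
begin

definition integ :: "(real \<Rightarrow> real) \<Rightarrow> (real \<Rightarrow> real) \<Rightarrow> bool" where
  "integ F f \<longleftrightarrow> (\<forall>s t. 0 \<le> s \<longrightarrow> s \<le> t \<longrightarrow> t \<le> 1 \<longrightarrow> (f has_integral (F t - F s)) {s..t})"

lemma integD: "integ F f \<Longrightarrow> 0 \<le> s \<Longrightarrow> s \<le> t \<Longrightarrow> t \<le> 1 \<Longrightarrow> (f has_integral (F t - F s)) {s..t}"
  unfolding integ_def by blast

lemma integ_add: "integ F f \<Longrightarrow> integ G g \<Longrightarrow> integ (\<lambda>t. F t + G t) (\<lambda>s. f s + g s)"
  unfolding integ_def
proof (intro allI impI)
  fix s t :: real assume "\<forall>s t. 0 \<le> s \<longrightarrow> s \<le> t \<longrightarrow> t \<le> 1 \<longrightarrow> (f has_integral F t - F s) {s..t}"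
    "\<forall>s t. 0 \<le> s \<longrightarrow> s \<le> t \<longrightarrow> t \<le> 1 \<longrightarrow> (g has_integral G t - G s) {s..t}" "0 \<le> s" "s \<le> t" "t \<le> 1"
  then have "((\<lambda>s. f s + g s) has_integral (F t - F s) + (G t - G s)) {s..t}"
    by (intro has_integral_add) auto
  then show "((\<lambda>s. f s + g s) has_integral F t + G t - (F s + G s)) {s..t}"
    by (simp add: algebra_simps)
qed

lemma integ_cmul: "integ F f \<Longrightarrow> integ (\<lambda>t. c * F t) (\<lambda>s. c * f s)"
  unfolding integ_def
proof (intro allI impI)
  fix s t :: real assume "\<forall>s t. 0 \<le> s \<longrightarrow> s \<le> t \<longrightarrow> t \<le> 1 \<longrightarrow> (f has_integral F t - F s) {s..t}"
    "0 \<le> s" "s \<le> t" "t \<le> 1"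
  then have "((\<lambda>s. c * f s) has_integral c * (F t - F s)) {s..t}"
    by (intro has_integral_mult_right) auto
  then show "((\<lambda>s. c * f s) has_integral c * F t - c * F s) {s..t}"
    by (simp add: algebra_simps)
qed

lemma integ_diff: "integ F f \<Longrightarrow> integ G g \<Longrightarrow> integ (\<lambda>t. F t - G t) (\<lambda>s. f s - g s)"
  using integ_add[of F f "\<lambda>t. (-1) * G t" "\<lambda>s. (-1) * g s"] integ_cmul[of G g "-1"] by simp

lemma integ_const: "integ (\<lambda>t. c) (\<lambda>s. 0)"
  unfolding integ_def by simp

lemma integ_sum:
  assumes "finite A" "\<And>a. a \<in> A \<Longrightarrow> integ (F a) (f a)"
  shows "integ (\<lambda>t. \<Sum>a\<in>A. F a t) (\<lambda>s. \<Sum>a\<in>A. f a s)"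
  using assms
proof (induction A rule: finite_induct)
  case empty
  then show ?case by (simp add: integ_const)
next
  case (insert a A)
  have "integ (\<lambda>t. F a t + (\<Sum>a\<in>A. F a t)) (\<lambda>s. f a s + (\<Sum>a\<in>A. f a s))"
    using insert by (intro integ_add) auto
  then show ?case using insert by simp
qed

lemma integ_cong:
  assumes "integ F f" "\<And>s. 0 \<le> s \<Longrightarrow> s \<le> 1 \<Longrightarrow> f s = g s" "\<And>t. 0 \<le> t \<Longrightarrow> t \<le> 1 \<Longrightarrow> F t = G t"
  shows "integ G g"
  unfolding integ_def
proof (intro allI impI)
  fix s t :: real assume st: "0 \<le> s" "s \<le> t" "t \<le> 1"
  have "(f has_integral (F t - F s)) {s..t}" using assms(1) st by (rule integD)
  then have "(g has_integral (F t - F s)) {s..t}"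
    by (rule has_integral_eq[rotated]) (use st assms(2) in auto)
  then show "(g has_integral (G t - G s)) {s..t}" using st assms(3) by simp
qed

lemma integ_cont:
  assumes "integ F f" shows "continuous_on {0..1} F"
proof -
  have i1: "(f has_integral (F 1 - F 0)) {0..1}" using integD[OF assms] by simp
  then have fi: "f integrable_on {0..1}" by blast
  have eq: "F t = F 0 + integral {0..t} f" if "t \<in> {0..1}" for t
    using integD[OF assms, of 0 t] that by (auto dest: integral_unique)
  have "continuous_on {0..1} (\<lambda>t. F 0 + integral {0..t} f)"
    by (intro continuous_intros indefinite_integral_continuous_1 fi)
  then show ?thesis using continuous_on_cong eq by (metis (no_types, lifting))
qed

lemma integ_exp: "integ (\<lambda>t. exp (- 2 * t)) (\<lambda>s. - 2 * exp (- 2 * s))"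
  unfolding integ_def
proof (intro allI impI)
  fix s t :: real assume st: "0 \<le> s" "s \<le> t" "t \<le> 1"
  have d: "((\<lambda>t. exp (- 2 * t)) has_vector_derivative (- 2 * exp (- 2 * x))) (at x within {s..t})" for x
  proof -
    have "((\<lambda>t. exp (- 2 * t)) has_real_derivative (exp (- 2 * x) * (- 2))) (at x within {s..t})"
      by (auto intro!: derivative_eq_intros)
    then show ?thesis by (simp add: has_real_derivative_iff_has_vector_derivative mult.commute)
  qed
  show "((\<lambda>s. - 2 * exp (- 2 * s)) has_integral (exp (- 2 * t) - exp (- 2 * s))) {s..t}"
    by (rule fundamental_theorem_of_calculus[OF st(2)]) (use d in auto)
qed

lemma exit_lemma:
  assumes F: "integ F f" and a: "0 \<le> a" "a \<le> t" "t \<le> 1" and Fa: "0 \<le> F a"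
    and g0: "\<And>s. s \<in> {a..t} \<Longrightarrow> 0 \<le> g s" and gc: "continuous_on {a..t} g"
    and cond: "\<And>s. s \<in> {a..t} \<Longrightarrow> F s \<le> 0 \<Longrightarrow> - g s \<le> f s"
  shows "- integral {a..t} g \<le> F t"
proof (cases "0 \<le> F t")
  case True
  have "0 \<le> integral {a..t} g"
    using g0 by (intro integral_nonneg integrable_continuous_real gc) auto
  then show ?thesis using True by linarith
next
  case False
  have Fc: "continuous_on {a..t} F"
    using integ_cont[OF F] by (rule continuous_on_subset) (use a in auto)
  define Z where "Z = {a..t} \<inter> F -` {0..}"
  have Zc: "closed Z" unfolding Z_def by (intro continuous_closed_preimage Fc) auto
  have aZ: "a \<in> Z" using a Fa by (auto simp: Z_def)
  have Zb: "bdd_above Z" unfolding Z_def by (auto intro: bdd_aboveI[where M=t])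
  define s0 where "s0 = Sup Z"
  have s0Z: "s0 \<in> Z" unfolding s0_def using closed_contains_Sup[OF _ Zb Zc] aZ by blast
  then have s0: "a \<le> s0" "s0 \<le> t" "0 \<le> F s0" by (auto simp: Z_def)
  have after: "F s < 0" if "s0 < s" "s \<le> t" for s
  proof (rule ccontr)
    assume "\<not> F s < 0"
    then have "s \<in> Z" using that s0 by (auto simp: Z_def)
    then have "s \<le> s0" unfolding s0_def using Zb by (rule cSup_upper)
    then show False using that by simp
  qed
  have s0t: "s0 < t" using s0 False by (cases "s0 = t") auto
  have Fs0: "F s0 \<le> 0"
  proof (rule ccontr)
    assume "\<not> F s0 \<le> 0"
    then have pos: "F s0 > 0" by simp
    obtain d where d: "d > 0" "\<And>y. y \<in> {a..t} \<Longrightarrow> dist y s0 < d \<Longrightarrow> dist (F y) (F s0) < F s0"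
      using Fc s0 pos unfolding continuous_on_iff by (metis atLeastAtMost_iff)
    define y where "y = min t (s0 + d/2)"
    have y: "y \<in> {a..t}" "dist y s0 < d" "s0 < y" using d s0 s0t by (auto simp: y_def dist_real_def)
    have "F y > 0" using d(2)[OF y(1,2)] pos by (auto simp: dist_real_def)
    then show False using after[OF y(3)] y(1) by auto
  qed
  have intf: "(f has_integral (F t - F s0)) {s0..t}" using integD[OF F, of s0 t] s0 a by simp
  have gi: "g integrable_on {s0..t}"
    by (intro integrable_continuous_real continuous_on_subset[OF gc]) (use s0 in auto)
  have le1: "- integral {s0..t} g \<le> F t - F s0"
  proof (rule has_integral_le[OF has_integral_neg[OF integrable_integral[OF gi]] intf])
    fix s assume s: "s \<in> {s0..t}"
    have "F s \<le> 0" using s Fs0 after[of s] by (cases "s = s0") auto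
    then show "- g s \<le> f s" using cond[of s] s s0 by auto
  qed
  have le2: "integral {s0..t} g \<le> integral {a..t} g"
    by (rule integral_subset_le) (use s0 gi g0 in \<open>auto intro: integrable_continuous_real gc\<close>)
  show ?thesis using le1 le2 s0 by linarith
qed

lemma gronwall0:
  fixes M :: "real \<Rightarrow> real" and a b K :: real
  assumes ab: "a \<le> b" and Mc: "continuous_on {a..b} M" and M0: "\<And>t. t \<in> {a..b} \<Longrightarrow> 0 \<le> M t"
    and Mle: "\<And>t. t \<in> {a..b} \<Longrightarrow> M t \<le> K * integral {a..t} M"
    and K: "0 \<le> K" "K * (b - a) < 1"
  shows "\<And>t. t \<in> {a..b} \<Longrightarrow> M t = 0"
proof -
  obtain x where x: "x \<in> {a..b}" "\<And>y. y \<in> {a..b} \<Longrightarrow> M y \<le> M x"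
    using continuous_attains_sup[of "{a..b}" M] Mc ab by auto
  have "M x \<le> K * ((b - a) * M x)"
  proof -
    have "integral {a..x} M \<le> integral {a..x} (\<lambda>_. M x)"
      by (rule integral_le) (use x in \<open>auto intro!: integrable_continuous_real continuous_on_subset[OF Mc]\<close>)
    also have "\<dots> = (x - a) * M x" using x by simp
    also have "\<dots> \<le> (b - a) * M x" using x M0[OF x(1)] by (intro mult_right_mono) auto
    finally have "K * integral {a..x} M \<le> K * ((b - a) * M x)" using K by (intro mult_left_mono) auto
    then show ?thesis using Mle[OF x(1)] by linarith
  qed
  then have "M x * (1 - K * (b - a)) \<le> 0" by (simp add: algebra_simps)
  then have "M x \<le> 0" using K by (simp add: mult_le_0_iff)
  then show "\<And>t. t \<in> {a..b} \<Longrightarrow> M t = 0" using x M0 by (meson order_antisym order_trans)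
qed

definition ex :: "'j set \<Rightarrow> (real \<Rightarrow> 'j set \<Rightarrow> real) \<Rightarrow> ('j set \<Rightarrow> real) \<Rightarrow> real \<Rightarrow> real" where
  "ex J P A t = (\<Sum>S\<in>Pow J. A S * P t S)"

definition gen :: "'j set \<Rightarrow> (real \<Rightarrow> 'j set \<Rightarrow> 'j \<Rightarrow> real) \<Rightarrow> (real \<Rightarrow> 'j set \<Rightarrow> real) \<Rightarrow> ('j set \<Rightarrow> real) \<Rightarrow> real \<Rightarrow> real" where
  "gen J r P A s = (\<Sum>S\<in>Pow J. P s S * (\<Sum>w\<in>J - S. r s S w * (A (insert w S) - A S)))"

definition fw :: "'j set \<Rightarrow> (real \<Rightarrow> 'j set \<Rightarrow> 'j \<Rightarrow> real) \<Rightarrow> (real \<Rightarrow> 'j set \<Rightarrow> real) \<Rightarrow> 'j set \<Rightarrow> real \<Rightarrow> real" where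
  "fw J r P S s = (\<Sum>w\<in>S. P s (S - {w}) * r s (S - {w}) w) - P s S * (\<Sum>w\<in>J - S. r s S w)"

lemma mp_P0: "matched_process J r P \<Longrightarrow> P 0 S = (if S = {} then 1 else 0)"
  unfolding matched_process_def by blast

lemma mp_integ:
  assumes mp: "matched_process J r P" and S: "S \<subseteq> J"
  shows "integ (\<lambda>t. P t S) (fw J r P S)"
  unfolding integ_def
proof (intro allI impI)
  fix s t :: real assume st: "0 \<le> s" "s \<le> t" "t \<le> 1"
  have h: "\<And>t. t \<in> {0..1} \<Longrightarrow> (fw J r P S has_integral (P t S - P 0 S)) {0..t}"
    using mp S unfolding matched_process_def fw_def by blast
  have ht: "(fw J r P S has_integral (P t S - P 0 S)) {0..t}" using h st by auto
  have hs: "(fw J r P S has_integral (P s S - P 0 S)) {0..s}" using h st by auto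
  have it: "fw J r P S integrable_on {0..t}" using ht by blast
  have ist: "fw J r P S integrable_on {s..t}"
    by (rule integrable_subinterval_real[OF it]) (use st in auto)
  have "integral {0..s} (fw J r P S) + integral {s..t} (fw J r P S) = integral {0..t} (fw J r P S)"
    by (rule Henstock_Kurzweil_Integration.integral_combine) (use st it in auto)
  then have "integral {s..t} (fw J r P S) = P t S - P s S"
    using integral_unique[OF ht] integral_unique[OF hs] by simp
  then show "(fw J r P S has_integral (P t S - P s S)) {s..t}"
    using ist by (metis has_integral_integral)
qed

lemma gen_identity:
  assumes fin: "finite J"
  shows "(\<Sum>S\<in>Pow J. A S * fw J r P S s) = gen J r P A s"
proof -
  have finS: "\<And>S. S \<in> Pow J \<Longrightarrow> finite S" using fin by (auto intro: finite_subset)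
  have 1: "(\<Sum>S\<in>Pow J. A S * (\<Sum>w\<in>S. P s (S - {w}) * r s (S - {w}) w))
        = (\<Sum>T\<in>Pow J. \<Sum>w\<in>J - T. A (insert w T) * (P s T * r s T w))"
  proof -
    have "(\<Sum>S\<in>Pow J. A S * (\<Sum>w\<in>S. P s (S - {w}) * r s (S - {w}) w))
        = (\<Sum>S\<in>Pow J. \<Sum>w\<in>S. A S * (P s (S - {w}) * r s (S - {w}) w))"
      by (simp add: sum_distrib_left)
    also have "\<dots> = (\<Sum>(S, w)\<in>Sigma (Pow J) (\<lambda>S. S). A S * (P s (S - {w}) * r s (S - {w}) w))"
      by (rule sum.Sigma) (use fin finS in auto)
    also have "\<dots> = (\<Sum>(T, w)\<in>Sigma (Pow J) (\<lambda>T. J - T). A (insert w T) * (P s T * r s T w))"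
    proof (rule sum.reindex_bij_witness[where i = "\<lambda>(T, w). (insert w T, w)" and j = "\<lambda>(S, w). (S - {w}, w)"])
    qed (auto simp: insert_absorb)
    also have "\<dots> = (\<Sum>T\<in>Pow J. \<Sum>w\<in>J - T. A (insert w T) * (P s T * r s T w))"
      by (rule sum.Sigma[symmetric]) (use fin in auto)
    finally show ?thesis .
  qed
  have "(\<Sum>S\<in>Pow J. A S * fw J r P S s)
      = (\<Sum>S\<in>Pow J. A S * (\<Sum>w\<in>S. P s (S - {w}) * r s (S - {w}) w))
        - (\<Sum>S\<in>Pow J. A S * (P s S * (\<Sum>w\<in>J - S. r s S w)))"
    unfolding fw_def by (simp add: right_diff_distrib sum_subtractf)
  also have "\<dots> = (\<Sum>T\<in>Pow J. \<Sum>w\<in>J - T. A (insert w T) * (P s T * r s T w))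
        - (\<Sum>S\<in>Pow J. A S * (P s S * (\<Sum>w\<in>J - S. r s S w)))" using 1 by simp
  also have "\<dots> = gen J r P A s"
    unfolding gen_def
    by (simp add: sum_subtractf[symmetric] sum_distrib_left right_diff_distrib algebra_simps)
  finally show ?thesis .
qed

lemma ex_integ:
  assumes mp: "matched_process J r P" and fin: "finite J"
  shows "integ (ex J P A) (gen J r P A)"
proof -
  have "integ (\<lambda>t. \<Sum>S\<in>Pow J. A S * P t S) (\<lambda>s. \<Sum>S\<in>Pow J. A S * fw J r P S s)"
    using fin by (intro integ_sum integ_cmul mp_integ[OF mp]) auto
  then show ?thesis
    by (rule integ_cong) (auto simp: gen_identity[OF fin] ex_def)
qed

lemma integ_const_value:
  assumes "integ F (\<lambda>s. 0)" "t \<in> {0..1}" shows "F t = F 0"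
proof -
  have "((\<lambda>s. 0) has_integral (F t - F 0)) {0..t}" using integD[OF assms(1), of 0 t] assms(2) by auto
  then show ?thesis by (simp add: has_integral_0_eq)
qed

lemma mp_total:
  assumes mp: "matched_process J r P" and fin: "finite J" and t: "t \<in> {0..1}"
  shows "(\<Sum>S\<in>Pow J. P t S) = 1"
proof -
  have "integ (ex J P (\<lambda>_. 1)) (gen J r P (\<lambda>_. 1))" by (rule ex_integ[OF mp fin])
  moreover have "gen J r P (\<lambda>_. 1) = (\<lambda>s. 0)" by (auto simp: gen_def fun_eq_iff)
  ultimately have "ex J P (\<lambda>_. 1) t = ex J P (\<lambda>_. 1) 0" using integ_const_value t by metis
  moreover have "ex J P (\<lambda>_. 1) 0 = 1"
    using fin by (simp add: ex_def mp_P0[OF mp] sum.delta')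
  ultimately show ?thesis by (simp add: ex_def)
qed

lemma mp_cont:
  assumes mp: "matched_process J r P" and S: "S \<subseteq> J"
  shows "continuous_on {0..1} (\<lambda>t. P t S)"
  by (rule integ_cont[OF mp_integ[OF mp S]])

lemma mp_nonneg:
  assumes mp: "matched_process J r P" and fin: "finite J" and ab: "0 \<le> a" "a \<le> b" "b \<le> 1"
    and r0: "\<And>s S w. s \<in> {a..b} \<Longrightarrow> S \<subseteq> J \<Longrightarrow> w \<in> J - S \<Longrightarrow> 0 \<le> r s S w"
    and Pa: "\<And>S. S \<subseteq> J \<Longrightarrow> 0 \<le> P a S"
  shows "\<And>s S. s \<in> {a..b} \<Longrightarrow> S \<subseteq> J \<Longrightarrow> 0 \<le> P s S"
proof -
  have main: "\<forall>x\<in>{a..b}. 0 \<le> P x S" if "S \<subseteq> J" for S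
    using that
  proof (induction "card S" arbitrary: S rule: less_induct)
    case less
    have finS: "finite S" using less.prems fin by (rule finite_subset)
    have IH: "0 \<le> P x (S - {w})" if x: "x \<in> {a..b}" and w: "w \<in> S" for x w
    proof -
      have "card (S - {w}) < card S" by (rule card_Diff1_less[OF finS w])
      then show "0 \<le> P x (S - {w})"
        using less.hyps[of "S - {w}"] less.prems x by blast
    qed
    show ?case
    proof
      fix t assume t: "t \<in> {a..b}"
      have "- integral {a..t} (\<lambda>_. 0) \<le> P t S"
      proof (rule exit_lemma[OF mp_integ[OF mp less.prems], where g = "\<lambda>_. 0"])
        show "0 \<le> a" "a \<le> t" "t \<le> 1" using t ab by auto
        show "0 \<le> P a S" using Pa less.prems by blast
        show "continuous_on {a..t} (\<lambda>_. 0::real)" by simp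
        fix x assume x: "x \<in> {a..t}" and Px: "P x S \<le> 0"
        have xab: "x \<in> {a..b}" using x t by auto
        have 1: "0 \<le> (\<Sum>w\<in>S. P x (S - {w}) * r x (S - {w}) w)"
          by (intro sum_nonneg mult_nonneg_nonneg IH xab r0) (use less.prems in auto)
        have 2: "0 \<le> (\<Sum>w\<in>J - S. r x S w)"
          by (intro sum_nonneg r0 xab less.prems)
        have "P x S * (\<Sum>w\<in>J - S. r x S w) \<le> 0" using Px 2 by (simp add: mult_nonpos_nonneg)
        then show "- 0 \<le> fw J r P S x" unfolding fw_def using 1 by linarith
      qed simp
      then show "0 \<le> P t S" by simp
    qed
  qed
  fix s S assume "s \<in> {a..b}" "S \<subseteq> J"
  then show "0 \<le> P s S" using main by blast
qed

lemma gen_notin: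
  assumes fin: "finite J" and u: "u \<in> J"
  shows "gen J r P (\<lambda>S. if u \<notin> S then 1 else 0) s = - (\<Sum>S\<in>Pow J. if u \<notin> S then P s S * r s S u else 0)"
proof -
  have inner: "(\<Sum>w\<in>J - S. r s S w * ((if u \<notin> insert w S then 1 else 0) - (if u \<notin> S then 1 else 0)))
      = (if u \<notin> S then - r s S u else 0)" for S
  proof (cases "u \<in> S")
    case True then show ?thesis by simp
  next
    case False
    have "(\<Sum>w\<in>J - S. r s S w * ((if u \<notin> insert w S then 1 else 0) - (if u \<notin> S then 1 else 0)))
        = (\<Sum>w\<in>J - S. if w = u then - r s S u else 0)"
      by (rule sum.cong) (use False in auto)
    also have "\<dots> = - r s S u" using False u fin by simp
    finally show ?thesis using False by simp
  qed
  show ?thesis unfolding gen_def inner sum_negf[symmetric] by (rule sum.cong) auto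
qed

lemma gen_both:
  assumes fin: "finite J" and u: "u \<in> J" and v: "v \<in> J" and uv: "u \<noteq> v"
  shows "gen J r P (\<lambda>S. if u \<in> S \<and> v \<in> S then 1 else 0) s
    = (\<Sum>S\<in>Pow J. P s S * ((if u \<in> S \<and> v \<notin> S then r s S v else 0) + (if v \<in> S \<and> u \<notin> S then r s S u else 0)))"
proof -
  have inner: "(\<Sum>w\<in>J - S. r s S w * ((if u \<in> insert w S \<and> v \<in> insert w S then 1 else 0) - (if u \<in> S \<and> v \<in> S then 1 else 0)))
      = (if u \<in> S \<and> v \<notin> S then r s S v else 0) + (if v \<in> S \<and> u \<notin> S then r s S u else 0)" for S
  proof -
    consider "u \<in> S" "v \<in> S" | "u \<in> S" "v \<notin> S" | "u \<notin> S" "v \<in> S" | "u \<notin> S" "v \<notin> S" by blast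
    then show ?thesis
    proof cases
      case 1 then show ?thesis by simp
    next
      case 2
      have "(\<Sum>w\<in>J - S. r s S w * ((if u \<in> insert w S \<and> v \<in> insert w S then 1 else 0) - (if u \<in> S \<and> v \<in> S then 1 else 0)))
          = (\<Sum>w\<in>J - S. if w = v then r s S v else 0)"
        by (rule sum.cong) (use 2 in auto)
      also have "\<dots> = r s S v" using 2 v fin by simp
      finally show ?thesis using 2 by simp
    next
      case 3
      have "(\<Sum>w\<in>J - S. r s S w * ((if u \<in> insert w S \<and> v \<in> insert w S then 1 else 0) - (if u \<in> S \<and> v \<in> S then 1 else 0)))
          = (\<Sum>w\<in>J - S. if w = u then r s S u else 0)"
        by (rule sum.cong) (use 3 in auto)
      also have "\<dots> = r s S u" using 3 u fin by simp
      finally show ?thesis using 3 by simp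
    next
      case 4
      have "(\<Sum>w\<in>J - S. r s S w * ((if u \<in> insert w S \<and> v \<in> insert w S then 1 else 0) - (if u \<in> S \<and> v \<in> S then 1 else 0)))
          = (\<Sum>w\<in>J - S. 0)"
        by (rule sum.cong) (use 4 uv in auto)
      then show ?thesis using 4 by simp
    qed
  qed
  show ?thesis unfolding gen_def inner ..
qed

definition c1 :: "real \<Rightarrow> real \<Rightarrow> real" where
  "c1 t0 s = (1 - ln 2) + (if t0 < s then ln 2 else 0)"
definition cc :: "real \<Rightarrow> real \<Rightarrow> real" where
  "cc t0 s = (1 - ln 2) + (if t0 < s then 2 * ln 2 else 0)"

lemma ln2_bounds: "0 < ln (2::real)" "ln (2::real) < 1"
  using ln_2_less_1 ln_gt_zero[of 2] by auto

lemma HI0: "{i \<in> H_I. (0::nat) \<in> H_N i} = {0, 1}"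
  by (auto simp: H_I_def H_N_def)
lemma HI1: "{i \<in> H_I. (1::nat) \<in> H_N i} = {0, 2}"
  by (auto simp: H_I_def H_N_def)

lemma RES_H0: "RES_rate H_I H_N H_lam t0 s S 0
   = (1 - ln 2) + (if t0 < s then 2 * ln 2 * (if 1 \<in> S then 1 else 1/2) else 0)"
  unfolding RES_rate_def HI0 by (simp add: H_N_def H_lam_def subset_eq)

lemma RES_H1: "RES_rate H_I H_N H_lam t0 s S 1
   = (1 - ln 2) + (if t0 < s then 2 * ln 2 * (if 0 \<in> S then 1 else 1/2) else 0)"
  proof -
  have "H_N 0 - {1} = {0}" by (auto simp: H_N_def)
  then show ?thesis unfolding RES_rate_def HI1 by (simp add: H_N_def H_lam_def)
qed

lemma PowHJ: "Pow H_J = {{}, {0}, {1}, {0, 1}}"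
  by (auto simp: H_J_def Pow_insert)

lemma RES_H1': "RES_rate H_I H_N H_lam t0 s S (Suc 0)
   = (1 - ln 2) + (if t0 < s then 2 * ln 2 * (if 0 \<in> S then 1 else 1/2) else 0)"
  using RES_H1 by simp

lemma fwH:
  fixes PH :: "real \<Rightarrow> nat set \<Rightarrow> real"
  shows "fw H_J (RES_rate H_I H_N H_lam t0) PH {} s = - PH s {} * (2 * c1 t0 s)"
    and "fw H_J (RES_rate H_I H_N H_lam t0) PH {0} s = PH s {} * c1 t0 s - PH s {0} * cc t0 s"
    and "fw H_J (RES_rate H_I H_N H_lam t0) PH {1} s = PH s {} * c1 t0 s - PH s {1} * cc t0 s"
    and "fw H_J (RES_rate H_I H_N H_lam t0) PH {0, 1} s = cc t0 s * (PH s {0} + PH s {1})"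
  by (auto simp: fw_def H_J_def RES_H0 RES_H1 RES_H1' c1_def cc_def algebra_simps insert_Diff_if)

locale setting =
  fixes I :: "'i set" and J :: "'j set" and N :: "'i \<Rightarrow> 'j set"
    and lam :: "'i \<Rightarrow> real" and x :: "'i \<Rightarrow> 'j \<Rightarrow> real" and lab :: "'i \<Rightarrow> 'j \<Rightarrow> bool"
    and t0 :: real and PH :: "real \<Rightarrow> nat set \<Rightarrow> real" and P :: "real \<Rightarrow> 'j set \<Rightarrow> real"
  assumes inst: "standing_instance I J N lam x"
    and labv: "valid_labeling I J N x lab"
    and t0: "0 \<le> t0" "t0 \<le> 1"
    and H: "matched_process H_J (RES_rate H_I H_N H_lam t0) PH"
    and GEN0: "matched_process J
               (GEN_rate I J N lam lab t0 (\<lambda>s. 1 - both_matched H_J PH s 0 1) P) P"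
begin

definition gb :: "real \<Rightarrow> real" where "gb s = 1 - both_matched H_J PH s 0 1"
abbreviation rG where "rG \<equiv> GEN_rate I J N lam lab t0 gb P"
abbreviation rH where "rH \<equiv> RES_rate H_I H_N H_lam t0"

lemma GEN: "matched_process J rG P"
  using GEN0 by (simp add: gb_def[abs_def])

definition oth :: "'i \<Rightarrow> 'j \<Rightarrow> 'j" where "oth i w = the_elem (N i - {w})"
definition gp :: "'j \<Rightarrow> 'j \<Rightarrow> real \<Rightarrow> real" where "gp u v s = 1 - both_matched J P s u v"
definition pp :: "'j \<Rightarrow> real \<Rightarrow> real" where "pp u s = ex J P (\<lambda>S. if u \<notin> S then 1 else 0) s"
definition EE :: "('j \<times> 'j) set" where "EE = {(u, v). \<exists>i\<in>I. card (N i) = 2 \<and> N i = {u, v}}"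
definition IL :: "'j \<Rightarrow> 'i set" where "IL w = {i \<in> I. w \<in> N i \<and> lab i w}"
definition IN :: "'j \<Rightarrow> 'i set" where "IN w = {i \<in> I. w \<in> N i \<and> \<not> lab i w}"

lemma finI: "finite I" and finJ: "finite J"
  using inst by (auto simp: standing_instance_def)

lemma NJ: "i \<in> I \<Longrightarrow> N i \<subseteq> J" and lam_pos: "i \<in> I \<Longrightarrow> 0 < lam i"
  using inst by (auto simp: standing_instance_def)

lemma cases12: "i \<in> I \<Longrightarrow> (card (N i) = 1 \<and> (\<forall>j\<in>N i. x i j = lam i)) \<or> (card (N i) = 2 \<and> (\<forall>j\<in>N i. x i j = lam i / 2))"
  using inst by (auto simp: standing_instance_def)

lemma xsum: "j \<in> J \<Longrightarrow> (\<Sum>i\<in>{i\<in>I. j \<in> N i}. x i j) = 1"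
  using inst by (auto simp: standing_instance_def)

lemma labsum: "j \<in> J \<Longrightarrow> (\<Sum>i\<in>IL j. x i j) = 1 - ln 2"
  using labv by (auto simp: valid_labeling_def IL_def)

lemma lab1: "i \<in> I \<Longrightarrow> card (N i) = 1 \<Longrightarrow> j \<in> N i \<Longrightarrow> lab i j"
  using labv by (auto simp: valid_labeling_def)

lemma split_I: "{i\<in>I. w \<in> N i} = IL w \<union> IN w" "IL w \<inter> IN w = {}" "finite (IL w)" "finite (IN w)"
  using finI by (auto simp: IL_def IN_def)

lemma sum_split: "(\<Sum>i\<in>{i\<in>I. w \<in> N i}. f i) = (\<Sum>i\<in>IL w. f i) + (\<Sum>i\<in>IN w. f i)"
  unfolding split_I(1) by (rule sum.union_disjoint) (use split_I in auto)

lemma nlabsum: "j \<in> J \<Longrightarrow> (\<Sum>i\<in>IN j. x i j) = ln 2"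
  using xsum[of j] labsum[of j] sum_split[where w=j and f="\<lambda>i. x i j"] by simp

lemma IN_card: assumes "i \<in> IN w" shows "card (N i) = 2" "x i w = lam i / 2"
proof -
  have i: "i \<in> I" "w \<in> N i" "\<not> lab i w" using assms by (auto simp: IN_def)
  then show "card (N i) = 2" using cases12[of i] lab1[of i w] by auto
  then show "x i w = lam i / 2" using cases12[of i] i by auto
qed

lemma oth:
  assumes i: "i \<in> I" "card (N i) = 2" "w \<in> N i"
  shows "N i = {w, oth i w}" "oth i w \<noteq> w" "oth i w \<in> J" "N i - {w} = {oth i w}" "(w, oth i w) \<in> EE"
proof -
  obtain a b where ab: "N i = {a, b}" "a \<noteq> b" using i(2) by (auto simp: card_2_iff)
  obtain v where v: "N i - {w} = {v}" "v \<noteq> w" "N i = {w, v}"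
  proof (cases "w = a")
    case True then show ?thesis using ab by (intro that[of b]) auto
  next
    case False then have "w = b" using ab i(3) by auto
    then show ?thesis using ab by (intro that[of a]) auto
  qed
  then have o: "oth i w = v" by (simp add: oth_def)
  show "N i = {w, oth i w}" "oth i w \<noteq> w" "N i - {w} = {oth i w}" using v o by auto
  show "oth i w \<in> J" using NJ[OF i(1)] v o by auto
  show "(w, oth i w) \<in> EE" unfolding EE_def using i v o by blast
qed

definition rt :: "real \<Rightarrow> 'j set \<Rightarrow> 'j \<Rightarrow> 'i \<Rightarrow> real" where
  "rt s S w i = (if lab i w then x i w
     else if t0 < s then lam i * (gb s / gp w (oth i w) s) * (if oth i w \<in> S then 1 else 1/2) else 0)"

lemma rG_form: "rG s S w = (\<Sum>i\<in>{i\<in>I. w \<in> N i}. rt s S w i)"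
  unfolding GEN_rate_def
proof (rule sum.cong[OF refl])
  fix i assume "i \<in> {i\<in>I. w \<in> N i}"
  then have i: "i \<in> I" "w \<in> N i" by auto
  show "lam i * (if card (N i) = 1 then 1 else \<Sum>v\<in>N i - {w}. if lab i w then 1 / 2
          else if t0 < s then if v \<in> S then gb s / (1 - both_matched J P s w v)
          else gb s / (2 * (1 - both_matched J P s w v)) else 0) = rt s S w i"
  proof (cases "card (N i) = 1")
    case True
    then show ?thesis using cases12[OF i(1)] lab1[OF i(1) True i(2)] i by (auto simp: rt_def)
  next
    case False
    then have c2: "card (N i) = 2" "\<forall>j\<in>N i. x i j = lam i / 2" using cases12[OF i(1)] by auto
    show ?thesis using False c2 i oth[OF i(1) c2(1) i(2)]
      by (auto simp: rt_def gp_def)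
  qed
qed


lemma finHJ: "finite H_J" by (simp add: H_J_def)
lemma HJsub: "{} \<subseteq> H_J" "{0} \<subseteq> H_J" "{1} \<subseteq> H_J" "{0, 1} \<subseteq> H_J" by (auto simp: H_J_def)

lemma Hint0: "integ (\<lambda>t. PH t {}) (\<lambda>s. - PH s {} * (2 * c1 t0 s))"
  using mp_integ[OF H, of "{}"] by (rule integ_cong) (auto simp: fwH)
lemma Hinta: "integ (\<lambda>t. PH t {0}) (\<lambda>s. PH s {} * c1 t0 s - PH s {0} * cc t0 s)"
  by (rule integ_cong[OF mp_integ[OF H HJsub(2)]]) (simp_all only: fwH)
lemma Hintb: "integ (\<lambda>t. PH t {1}) (\<lambda>s. PH s {} * c1 t0 s - PH s {1} * cc t0 s)"
  by (rule integ_cong[OF mp_integ[OF H HJsub(3)]]) (simp_all only: fwH)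
lemma Hint2: "integ (\<lambda>t. PH t {0, 1}) (\<lambda>s. cc t0 s * (PH s {0} + PH s {1}))"
  by (rule integ_cong[OF mp_integ[OF H HJsub(4)]]) (simp_all only: fwH)

lemma Htot: "t \<in> {0..1} \<Longrightarrow> PH t {} + PH t {0} + PH t {1} + PH t {0, 1} = 1"
  using mp_total[OF H finHJ, of t] unfolding PowHJ by (simp add: algebra_simps)

lemma bmH: "both_matched H_J PH s 0 1 = PH s {0, 1}"
proof -
  have eq: "{S. S \<subseteq> H_J \<and> 0 \<in> S \<and> 1 \<in> S} = {{0, 1}}" by (auto simp: H_J_def)
  show ?thesis unfolding both_matched_def eq by simp
qed

lemma gb_eq: "gb s = 1 - PH s {0, 1}" unfolding gb_def bmH ..

lemma H0: "PH 0 {} = 1" "PH 0 {0} = 0" "PH 0 {1} = 0" "PH 0 {0, 1} = 0"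
  using mp_P0[OF H] by auto

lemma G0: "P 0 S = (if S = {} then 1 else 0)"
  using mp_P0[OF GEN] .

lemma Gtot: "t \<in> {0..1} \<Longrightarrow> (\<Sum>S\<in>Pow J. P t S) = 1"
  using mp_total[OF GEN finJ] .

lemma pp_eq: "pp u s = (\<Sum>S\<in>Pow J. if u \<notin> S then P s S else 0)"
  unfolding pp_def ex_def by (rule sum.cong) auto

lemma bm_eq: "both_matched J P s u v = (\<Sum>S\<in>Pow J. if u \<in> S \<and> v \<in> S then P s S else 0)"
proof -
  have "{S. S \<subseteq> J \<and> u \<in> S \<and> v \<in> S} = {S \<in> Pow J. u \<in> S \<and> v \<in> S}" by auto
  then show ?thesis unfolding both_matched_def using sum.inter_filter[of "Pow J" "P s" "\<lambda>S. u \<in> S \<and> v \<in> S"] finJ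
    by simp
qed

lemma bm_ex: "both_matched J P s u v = ex J P (\<lambda>S. if u \<in> S \<and> v \<in> S then 1 else 0) s"
  unfolding bm_eq ex_def by (rule sum.cong) auto

lemma integ_pp: "integ (pp u) (gen J rG P (\<lambda>S. if u \<notin> S then 1 else 0))"
proof -
  have "pp u = ex J P (\<lambda>S. if u \<notin> S then 1 else 0)" by (simp add: pp_def[abs_def])
  then show ?thesis using ex_integ[OF GEN finJ] by simp
qed

lemma integ_bm: "integ (\<lambda>t. both_matched J P t u v) (gen J rG P (\<lambda>S. if u \<in> S \<and> v \<in> S then 1 else 0))"
proof -
  have "(\<lambda>t. both_matched J P t u v) = ex J P (\<lambda>S. if u \<in> S \<and> v \<in> S then 1 else 0)" by (simp add: bm_ex fun_eq_iff)
  then show ?thesis using ex_integ[OF GEN finJ] by simp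
qed

lemma x_nonneg: "i \<in> I \<Longrightarrow> w \<in> N i \<Longrightarrow> 0 \<le> x i w"
  using cases12[of i] lam_pos[of i] by auto

lemma rate_nonneg:
  assumes gb0: "0 \<le> gb s" and d: "\<And>i. i \<in> IN w \<Longrightarrow> 0 < gp w (oth i w) s"
  shows "0 \<le> rG s S w"
  unfolding rG_form
proof (rule sum_nonneg)
  fix i assume i: "i \<in> {i \<in> I. w \<in> N i}"
  show "0 \<le> rt s S w i"
  proof (cases "lab i w")
    case True then show ?thesis using x_nonneg i by (auto simp: rt_def)
  next
    case False
    then have "i \<in> IN w" using i by (auto simp: IN_def)
    then have "0 < gp w (oth i w) s" by (rule d)
    then show ?thesis using False gb0 lam_pos[of i] i by (auto simp: rt_def)
  qed
qed

lemma rate_bound: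
  assumes w: "w \<in> J" and gb0: "0 \<le> gb s" and c0: "0 < c0" and M0: "0 \<le> M"
    and bnd: "\<And>i. i \<in> IN w \<Longrightarrow> c0 \<le> gp w (oth i w) s \<and> gb s - gp w (oth i w) s \<le> M"
  shows "rG s S w \<le> cc t0 s + 2 / c0 * M"
proof -
  have IL: "(\<Sum>i\<in>IL w. rt s S w i) = 1 - ln 2"
    using labsum[OF w] by (simp add: rt_def IL_def)
  have each: "rt s S w i \<le> (if t0 < s then lam i * (1 + M / c0) else 0)" if i: "i \<in> IN w" for i
  proof (cases "t0 < s")
    case True
    define d where "d = gp w (oth i w) s"
    have d: "c0 \<le> d" "gb s - d \<le> M" using bnd[OF i] by (auto simp: d_def)
    have dpos: "0 < d" using d c0 by linarith
    have "gb s / d \<le> (d + M) / d" using d dpos by (intro divide_right_mono) auto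
    also have "\<dots> = 1 + M / d" using dpos by (simp add: field_simps)
    also have "M / d \<le> M / c0" using d c0 M0 by (intro divide_left_mono) auto
    finally have q: "gb s / d \<le> 1 + M / c0" by simp
    have q0: "0 \<le> gb s / d" using gb0 dpos by simp
    have lp: "0 < lam i" using i lam_pos by (auto simp: IN_def)
    have nn: "0 \<le> lam i * (gb s / d)" by (rule mult_nonneg_nonneg[OF less_imp_le[OF lp] q0])
    have "rt s S w i = lam i * (gb s / d) * (if oth i w \<in> S then 1 else 1/2)"
      using i True by (auto simp: rt_def IN_def d_def)
    also have "\<dots> \<le> lam i * (gb s / d) * 1"
      by (rule mult_left_mono[OF _ nn]) simp
    finally have "rt s S w i \<le> lam i * (gb s / d)" by simp
    also have "\<dots> \<le> lam i * (1 + M / c0)" using lp q by (intro mult_left_mono) auto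
    finally show ?thesis using True by simp
  next
    case False then show ?thesis using i by (auto simp: rt_def IN_def)
  qed
  have "(\<Sum>i\<in>IN w. rt s S w i) \<le> (\<Sum>i\<in>IN w. (if t0 < s then lam i * (1 + M / c0) else 0))"
    by (rule sum_mono) (rule each)
  also have "\<dots> = (if t0 < s then 2 * ln 2 * (1 + M / c0) else 0)"
  proof -
    have "(\<Sum>i\<in>IN w. lam i) = 2 * ln 2"
    proof -
      have "(\<Sum>i\<in>IN w. lam i) = (\<Sum>i\<in>IN w. 2 * x i w)" by (rule sum.cong) (auto simp: IN_card)
      then show ?thesis using nlabsum[OF w] by (simp add: sum_distrib_left[symmetric])
    qed
    then show ?thesis by (simp add: sum_distrib_right[symmetric])
  qed
  finally have INb: "(\<Sum>i\<in>IN w. rt s S w i) \<le> (if t0 < s then 2 * ln 2 * (1 + M / c0) else 0)" .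
  have "rG s S w = (1 - ln 2) + (\<Sum>i\<in>IN w. rt s S w i)"
    unfolding rG_form sum_split IL ..
  also have "\<dots> \<le> (1 - ln 2) + (if t0 < s then 2 * ln 2 * (1 + M / c0) else 0)" using INb by simp
  also have "\<dots> \<le> cc t0 s + 2 / c0 * M"
  proof -
    have "0 \<le> M / c0" using M0 c0 by simp
    then have "2 * ln 2 * (M / c0) \<le> 2 * (M / c0)" using ln2_bounds by (intro mult_right_mono) auto
    then show ?thesis using ln2_bounds M0 c0 by (auto simp: cc_def algebra_simps)
  qed
  finally show ?thesis .
qed

end

context setting begin

lemma marg:
  assumes u: "u \<in> J" and s: "s \<in> {0..1}" and d0: "\<And>i. i \<in> IN u \<Longrightarrow> gp u (oth i u) s \<noteq> 0"
  shows "(\<Sum>S\<in>Pow J. if u \<notin> S then P s S * rG s S u else 0)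
    = (1 - ln 2) * pp u s + (if t0 < s then ln 2 * gb s
        + (\<Sum>i\<in>IN u. lam i / 2 * gb s * (pp u s - pp (oth i u) s) / gp u (oth i u) s) else 0)"
proof -
  define Q where "Q i = (\<Sum>S\<in>Pow J. if u \<notin> S then P s S * rt s S u i else 0)" for i
  have 1: "(\<Sum>S\<in>Pow J. if u \<notin> S then P s S * rG s S u else 0) = (\<Sum>i\<in>{i\<in>I. u \<in> N i}. Q i)"
  proof -
    have "(\<Sum>S\<in>Pow J. if u \<notin> S then P s S * rG s S u else 0)
        = (\<Sum>S\<in>Pow J. \<Sum>i\<in>{i\<in>I. u \<in> N i}. if u \<notin> S then P s S * rt s S u i else 0)"
      by (rule sum.cong) (auto simp: rG_form sum_distrib_left)
    also have "\<dots> = (\<Sum>i\<in>{i\<in>I. u \<in> N i}. Q i)" unfolding Q_def by (rule sum.swap)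
    finally show ?thesis .
  qed
  have QL: "Q i = x i u * pp u s" if "i \<in> IL u" for i
  proof -
    have "Q i = (\<Sum>S\<in>Pow J. x i u * (if u \<notin> S then P s S else 0))"
      unfolding Q_def using that by (intro sum.cong) (auto simp: rt_def IL_def)
    then show ?thesis by (simp add: pp_eq sum_distrib_left)
  qed
  have tot: "(\<Sum>S\<in>Pow J. P s S) = 1" using Gtot s .
  have QN: "Q i = (if t0 < s then x i u * gb s
      + lam i / 2 * gb s * (pp u s - pp (oth i u) s) / gp u (oth i u) s else 0)" if i: "i \<in> IN u" for i
  proof (cases "t0 < s")
    case False
    have "Q i = 0" unfolding Q_def using i False by (intro sum.neutral) (auto simp: rt_def IN_def)
    then show ?thesis using False by simp
  next
    case True
    define ov where "ov = oth i u"
    define d where "d = gp u ov s"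
    have dne: "d \<noteq> 0" using d0[OF i] by (simp add: d_def ov_def)
    have key: "(\<Sum>S\<in>Pow J. if u \<notin> S then P s S * (if ov \<in> S then 1 else 1/2) else 0)
        = 1/2 * (pp u s + d - pp ov s)"
    proof -
      have "(\<Sum>S\<in>Pow J. if u \<notin> S then P s S * (if ov \<in> S then 1 else 1/2) else 0)
          = (\<Sum>S\<in>Pow J. 1/2 * ((if u \<notin> S then P s S else 0) + P s S
              - (if u \<in> S \<and> ov \<in> S then P s S else 0) - (if ov \<notin> S then P s S else 0)))"
        by (rule sum.cong) auto
      also have "\<dots> = 1/2 * (\<Sum>S\<in>Pow J. ((if u \<notin> S then P s S else 0) + P s S
              - (if u \<in> S \<and> ov \<in> S then P s S else 0) - (if ov \<notin> S then P s S else 0)))"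
        by (rule sum_distrib_left[symmetric])
      also have "\<dots> = 1/2 * (pp u s + (\<Sum>S\<in>Pow J. P s S) - both_matched J P s u ov - pp ov s)"
        by (simp only: pp_eq bm_eq sum.distrib sum_subtractf)
      also have "\<dots> = 1/2 * (pp u s + d - pp ov s)" using tot by (simp add: d_def gp_def)
      finally show ?thesis .
    qed
    have "Q i = (\<Sum>S\<in>Pow J. lam i * (gb s / d) * (if u \<notin> S then P s S * (if ov \<in> S then 1 else 1/2) else 0))"
      unfolding Q_def using i True by (intro sum.cong) (auto simp: rt_def IN_def d_def ov_def)
    also have "\<dots> = lam i * (gb s / d) * (1/2 * (pp u s + d - pp ov s))"
      by (simp only: sum_distrib_left[symmetric] key)
    also have "\<dots> = lam i / 2 * gb s + lam i / 2 * gb s * (pp u s - pp ov s) / d"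
      using dne by (simp add: field_simps)
    finally show ?thesis using True IN_card(2)[OF i] by (simp add: d_def ov_def)
  qed
  have 2: "(\<Sum>i\<in>{i\<in>I. u \<in> N i}. Q i) = (\<Sum>i\<in>IL u. x i u * pp u s)
      + (\<Sum>i\<in>IN u. (if t0 < s then x i u * gb s
      + lam i / 2 * gb s * (pp u s - pp (oth i u) s) / gp u (oth i u) s else 0))"
    unfolding sum_split using QL QN by simp
  have 3: "(\<Sum>i\<in>IL u. x i u * pp u s) = (1 - ln 2) * pp u s"
    using labsum[OF u] by (simp add: sum_distrib_right[symmetric])
  have 4: "(\<Sum>i\<in>IN u. (if t0 < s then x i u * gb s
      + lam i / 2 * gb s * (pp u s - pp (oth i u) s) / gp u (oth i u) s else 0))
      = (if t0 < s then ln 2 * gb s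
        + (\<Sum>i\<in>IN u. lam i / 2 * gb s * (pp u s - pp (oth i u) s) / gp u (oth i u) s) else 0)"
  proof (cases "t0 < s")
    case True
    then show ?thesis using nlabsum[OF u] by (simp add: sum.distrib sum_distrib_right[symmetric])
  qed simp
  show ?thesis using 1 2 3 4 by simp
qed

end

definition c0 :: real where "c0 = exp (- 2) / 2"

lemma c0_pos: "0 < c0" by (simp add: c0_def)

lemma c1_bounds: "0 \<le> c1 t0 s" "c1 t0 s \<le> 2"
proof -
  have a: "0 < ln (2::real)" "ln (2::real) < 1" by (rule ln2_bounds)+
  consider "c1 t0 s = 1" | "c1 t0 s = 1 - ln 2" by (cases "t0 < s") (simp_all add: c1_def)
  then show "0 \<le> c1 t0 s" "c1 t0 s \<le> 2" by (cases; use a in linarith)+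
qed
lemma cc_bounds: "0 \<le> cc t0 s" "cc t0 s \<le> 2"
proof -
  have a: "0 < ln (2::real)" "ln (2::real) < 1" by (rule ln2_bounds)+
  consider "cc t0 s = 1 + ln 2" | "cc t0 s = 1 - ln 2" by (cases "t0 < s") (simp_all add: cc_def)
  then show "0 \<le> cc t0 s" "cc t0 s \<le> 2" by (cases; use a in linarith)+
qed

context setting begin

definition ee :: "'j \<Rightarrow> real \<Rightarrow> real" where "ee u s = pp u s - (PH s {} + PH s {1})"
definition DD :: "'j \<times> 'j \<Rightarrow> real \<Rightarrow> real" where "DD p s = gp (fst p) (snd p) s - gb s"
definition MM :: "real \<Rightarrow> real" where "MM s = (\<Sum>q\<in>EE. max 0 (- DD q s))"
definition ES :: "real \<Rightarrow> real" where "ES s = (\<Sum>w\<in>J. \<bar>ee w s\<bar>)"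

lemma EE_fin: "finite EE"
proof -
  have "EE \<subseteq> J \<times> J" unfolding EE_def using NJ by auto
  then show ?thesis using finJ by (meson finite_SigmaI finite_subset)
qed

lemma EE_mem: assumes "(u, v) \<in> EE" shows "u \<in> J" "v \<in> J" "u \<noteq> v"
proof -
  obtain i where i: "i \<in> I" "card (N i) = 2" "N i = {u, v}" using assms by (auto simp: EE_def)
  then show "u \<in> J" "v \<in> J" using NJ[of i] by auto
  show "u \<noteq> v" using i by auto
qed

lemma gb_H: "s \<in> {0..1} \<Longrightarrow> gb s = PH s {} + PH s {0} + PH s {1}"
  using Htot[of s] by (simp add: gb_eq)

lemma ee_rate:
  assumes u: "u \<in> J" and s: "s \<in> {0..1}" and PH0: "\<And>S. S \<subseteq> H_J \<Longrightarrow> 0 \<le> PH s S"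
    and hab: "PH s {0} = PH s {1}" and low: "\<And>q. q \<in> EE \<Longrightarrow> c0 \<le> gp (fst q) (snd q) s"
  shows "\<bar>gen J rG P (\<lambda>S. if u \<notin> S then 1 else 0) s - (- PH s {} * (2 * c1 t0 s) + (PH s {} * c1 t0 s - PH s {1} * cc t0 s))\<bar>
     \<le> (1 + 2 / c0) * ES s"
proof -
  have lowi: "c0 \<le> gp u (oth i u) s" "oth i u \<in> J" if i: "i \<in> IN u" for i
  proof -
    have ii: "i \<in> I" "card (N i) = 2" "u \<in> N i" using i IN_card(1)[OF i] by (auto simp: IN_def)
    show "c0 \<le> gp u (oth i u) s" using low[OF oth(5)[OF ii]] by simp
    show "oth i u \<in> J" using oth(3)[OF ii] .
  qed
  have d0: "gp u (oth i u) s \<noteq> 0" if "i \<in> IN u" for i using lowi[OF that] c0_pos by auto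
  have gb0: "0 \<le> gb s" and gb1: "gb s \<le> 1"
    using PH0[OF HJsub(1)] PH0[OF HJsub(2)] PH0[OF HJsub(3)] PH0[OF HJsub(4)] gb_H[OF s] gb_eq[of s] by auto
  define T where "T = (\<Sum>i\<in>IN u. lam i / 2 * gb s * (ee u s - ee (oth i u) s) / gp u (oth i u) s)"
  have phi: "gen J rG P (\<lambda>S. if u \<notin> S then 1 else 0) s - (- PH s {} * (2 * c1 t0 s) + (PH s {} * c1 t0 s - PH s {1} * cc t0 s))
      = - (1 - ln 2) * ee u s - (if t0 < s then T else 0)"
  proof -
    have e: "pp u s - pp (oth i u) s = ee u s - ee (oth i u) s" for i by (simp add: ee_def)
    have m: "(\<Sum>S\<in>Pow J. if u \<notin> S then P s S * rG s S u else 0)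
      = (1 - ln 2) * pp u s + (if t0 < s then ln 2 * gb s
        + (\<Sum>i\<in>IN u. lam i / 2 * gb s * (pp u s - pp (oth i u) s) / gp u (oth i u) s) else 0)"
      by (rule marg[OF u s d0])
    have TT: "(\<Sum>i\<in>IN u. lam i / 2 * gb s * (pp u s - pp (oth i u) s) / gp u (oth i u) s) = T"
      unfolding T_def e ..
    have "gen J rG P (\<lambda>S. if u \<notin> S then 1 else 0) s = - ((1 - ln 2) * pp u s + (if t0 < s then ln 2 * gb s + T else 0))"
      unfolding gen_notin[OF finJ u] m TT ..
    moreover have "gb s = PH s {} + 2 * PH s {1}" using gb_H[OF s] hab by simp
    ultimately show ?thesis by (auto simp: ee_def c1_def cc_def algebra_simps)
  qed
  have Tb: "\<bar>T\<bar> \<le> 2 / c0 * ES s"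
  proof -
    have eb: "\<bar>ee w s\<bar> \<le> ES s" if "w \<in> J" for w
      unfolding ES_def using that finJ by (intro member_le_sum) auto
    have "\<bar>T\<bar> \<le> (\<Sum>i\<in>IN u. \<bar>lam i / 2 * gb s * (ee u s - ee (oth i u) s) / gp u (oth i u) s\<bar>)"
      unfolding T_def by (rule sum_abs)
    also have "\<dots> \<le> (\<Sum>i\<in>IN u. x i u * (2 / c0 * ES s))"
    proof (rule sum_mono)
      fix i assume i: "i \<in> IN u"
      have lp: "0 < lam i" using i lam_pos by (auto simp: IN_def)
      have g: "c0 \<le> gp u (oth i u) s" using lowi[OF i] by simp
      have gp0: "0 < gp u (oth i u) s" using g c0_pos by linarith
      have q: "gb s / gp u (oth i u) s \<le> 1 / c0"
        using gb0 gb1 g c0_pos gp0 by (metis divide_mono zero_less_one)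
      have q0: "0 \<le> gb s / gp u (oth i u) s" using gb0 gp0 by simp
      have "\<bar>ee u s - ee (oth i u) s\<bar> \<le> 2 * ES s"
        using eb[OF u] eb[OF lowi(2)[OF i]] by linarith
      then have "\<bar>lam i / 2 * gb s * (ee u s - ee (oth i u) s) / gp u (oth i u) s\<bar>
          = lam i / 2 * (gb s / gp u (oth i u) s) * \<bar>ee u s - ee (oth i u) s\<bar>"
        using lp q0 gb0 gp0 by (simp add: abs_mult abs_divide)
      also have "\<dots> \<le> lam i / 2 * (1 / c0) * (2 * ES s)"
        using lp q q0 c0_pos \<open>\<bar>ee u s - ee (oth i u) s\<bar> \<le> 2 * ES s\<close>
        by (intro mult_mono mult_left_mono) auto
      also have "\<dots> = x i u * (2 / c0 * ES s)" using IN_card(2)[OF i] by simp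
      finally show "\<bar>lam i / 2 * gb s * (ee u s - ee (oth i u) s) / gp u (oth i u) s\<bar> \<le> x i u * (2 / c0 * ES s)" .
    qed
    also have "\<dots> = ln 2 * (2 / c0 * ES s)" by (simp only: sum_distrib_right[symmetric] nlabsum[OF u])
    also have "\<dots> \<le> 2 / c0 * ES s"
      using ln2_bounds c0_pos by (intro mult_left_le_one_le) (auto simp: ES_def)
    finally show ?thesis .
  qed
  have "\<bar>ee u s\<bar> \<le> ES s" unfolding ES_def using u finJ by (intro member_le_sum) auto
  then have "\<bar>- (1 - ln 2) * ee u s - (if t0 < s then T else 0)\<bar> \<le> ES s + 2 / c0 * ES s"
    using Tb ln2_bounds by (auto simp: abs_mult intro!: order_trans[OF abs_triangle_ineq4]
        add_mono order_trans[OF mult_left_le_one_le])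
  then show ?thesis unfolding phi by (simp add: algebra_simps)
qed


lemma MM_nonneg: "0 \<le> MM s" unfolding MM_def by (intro sum_nonneg) auto

lemma MM_ge: "q \<in> EE \<Longrightarrow> max 0 (- DD q s) \<le> MM s"
  unfolding MM_def using EE_fin by (intro member_le_sum) auto

lemma gp_alt: assumes s: "s \<in> {0..1}"
  shows "gp u v s = (\<Sum>S\<in>Pow J. if \<not> (u \<in> S \<and> v \<in> S) then P s S else 0)"
proof -
  have "(\<Sum>S\<in>Pow J. P s S) = (\<Sum>S\<in>Pow J. (if u \<in> S \<and> v \<in> S then P s S else 0) + (if \<not> (u \<in> S \<and> v \<in> S) then P s S else 0))"
    by (rule sum.cong) auto
  then have "(\<Sum>S\<in>Pow J. P s S) = both_matched J P s u v + (\<Sum>S\<in>Pow J. if \<not> (u \<in> S \<and> v \<in> S) then P s S else 0)"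
    by (simp add: sum.distrib bm_eq)
  then show ?thesis using Gtot[OF s] by (simp add: gp_def)
qed

lemma DD_rate:
  assumes p: "(u, v) \<in> EE" and s: "s \<in> {0..1}" and P0: "\<And>S. S \<subseteq> J \<Longrightarrow> 0 \<le> P s S"
    and PH0: "\<And>S. S \<subseteq> H_J \<Longrightarrow> 0 \<le> PH s S" and hab: "PH s {0} = PH s {1}"
    and e0: "\<And>w. w \<in> J \<Longrightarrow> ee w s = 0" and low: "\<And>q. q \<in> EE \<Longrightarrow> c0 \<le> gp (fst q) (snd q) s"
    and Dn: "DD (u, v) s \<le> 0"
  shows "- (2 / c0 * MM s) \<le> cc t0 s * (PH s {0} + PH s {1}) - gen J rG P (\<lambda>S. if u \<in> S \<and> v \<in> S then 1 else 0) s"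
proof -
  have u: "u \<in> J" and v: "v \<in> J" and uv: "u \<noteq> v" using EE_mem[OF p] by auto
  have gb0: "0 \<le> gb s"
    using PH0[OF HJsub(1)] PH0[OF HJsub(2)] PH0[OF HJsub(3)] gb_H[OF s] by auto
  define B where "B = cc t0 s + 2 / c0 * MM s"
  have rb: "rG s S w \<le> B" if w: "w \<in> J" for S w
    unfolding B_def
  proof (rule rate_bound[OF w gb0 c0_pos MM_nonneg])
    fix i assume i: "i \<in> IN w"
    have ii: "i \<in> I" "card (N i) = 2" "w \<in> N i" using i IN_card(1)[OF i] by (auto simp: IN_def)
    have q: "(w, oth i w) \<in> EE" by (rule oth(5)[OF ii])
    show "c0 \<le> gp w (oth i w) s \<and> gb s - gp w (oth i w) s \<le> MM s"
      using low[OF q] MM_ge[OF q, of s] by (auto simp: DD_def)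
  qed
  define A where "A S = (if u \<in> S \<and> v \<notin> S then 1 else 0) + (if v \<in> S \<and> u \<notin> S then 1 else (0::real))" for S
  define X where "X = (\<Sum>S\<in>Pow J. P s S * A S)"
  have genle: "gen J rG P (\<lambda>S. if u \<in> S \<and> v \<in> S then 1 else 0) s \<le> B * X"
  proof -
    have "gen J rG P (\<lambda>S. if u \<in> S \<and> v \<in> S then 1 else 0) s
        = (\<Sum>S\<in>Pow J. P s S * ((if u \<in> S \<and> v \<notin> S then rG s S v else 0) + (if v \<in> S \<and> u \<notin> S then rG s S u else 0)))"
      by (rule gen_both[OF finJ u v uv])
    also have "\<dots> \<le> (\<Sum>S\<in>Pow J. B * (P s S * A S))"
    proof (rule sum_mono)
      fix S assume S: "S \<in> Pow J"
      have "(if u \<in> S \<and> v \<notin> S then rG s S v else 0) + (if v \<in> S \<and> u \<notin> S then rG s S u else 0) \<le> B * A S"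
        using rb[OF u, of S] rb[OF v, of S] by (auto simp: A_def)
      then have "P s S * ((if u \<in> S \<and> v \<notin> S then rG s S v else 0) + (if v \<in> S \<and> u \<notin> S then rG s S u else 0)) \<le> P s S * (B * A S)"
        using P0[of S] S by (intro mult_left_mono) auto
      then show "P s S * ((if u \<in> S \<and> v \<notin> S then rG s S v else 0) + (if v \<in> S \<and> u \<notin> S then rG s S u else 0)) \<le> B * (P s S * A S)"
        by (simp add: algebra_simps)
    qed
    also have "\<dots> = B * X" unfolding X_def by (simp add: sum_distrib_left)
    finally show ?thesis .
  qed
  have X0: "0 \<le> X" unfolding X_def using P0 by (intro sum_nonneg) (auto simp: A_def)
  have X1: "X \<le> 1"
  proof -
    have "X \<le> (\<Sum>S\<in>Pow J. P s S)" unfolding X_def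
      using P0 uv by (intro sum_mono) (auto simp: A_def)
    then show ?thesis using Gtot[OF s] by simp
  qed
  have Xeq: "X = 2 * gp u v s - pp u s - pp v s"
  proof -
    have "X = (\<Sum>S\<in>Pow J. 2 * (if \<not> (u \<in> S \<and> v \<in> S) then P s S else 0) - (if u \<notin> S then P s S else 0) - (if v \<notin> S then P s S else 0))"
      unfolding X_def by (rule sum.cong) (auto simp: A_def)
    also have "\<dots> = 2 * gp u v s - pp u s - pp v s"
      by (simp only: sum_subtractf sum_distrib_left[symmetric] gp_alt[OF s] pp_eq)
    finally show ?thesis .
  qed
  have ppu: "pp u s = PH s {} + PH s {1}" and ppv: "pp v s = PH s {} + PH s {1}"
    using e0[OF u] e0[OF v] by (auto simp: ee_def)
  have gbe: "gb s = PH s {} + 2 * PH s {1}" using gb_H[OF s] hab by simp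
  have Dn': "gb s - gp u v s \<ge> 0" using Dn by (simp add: DD_def)
  have "B * X = cc t0 s * X + 2 / c0 * MM s * X" by (simp add: B_def algebra_simps)
  also have "2 / c0 * MM s * X \<le> 2 / c0 * MM s"
    using X0 X1 MM_nonneg[of s] c0_pos by (intro mult_left_le) auto
  finally have "gen J rG P (\<lambda>S. if u \<in> S \<and> v \<in> S then 1 else 0) s \<le> cc t0 s * X + 2 / c0 * MM s"
    using genle by linarith
  moreover have "cc t0 s * (PH s {0} + PH s {1}) - cc t0 s * X = 2 * cc t0 s * (gb s - gp u v s)"
  proof -
    have "(PH s {0} + PH s {1}) - X = 2 * (gb s - gp u v s)"
      unfolding Xeq ppu ppv gbe hab by (simp add: algebra_simps)
    then have "cc t0 s * ((PH s {0} + PH s {1}) - X) = cc t0 s * (2 * (gb s - gp u v s))" by simp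
    then show ?thesis by (simp add: algebra_simps)
  qed
  moreover have "0 \<le> 2 * cc t0 s * (gb s - gp u v s)" using Dn' cc_bounds(1) by simp
  ultimately show ?thesis by linarith
qed

end

lemma RES_nonneg: "0 \<le> RES_rate H_I H_N H_lam t0 s S w"
  unfolding RES_rate_def using ln2_bounds
  by (intro sum_nonneg mult_nonneg_nonneg) (auto simp: H_lam_def)

context setting begin

definition Inv :: "real \<Rightarrow> bool" where
  "Inv t \<longleftrightarrow> (\<forall>S. S \<subseteq> J \<longrightarrow> 0 \<le> P t S) \<and> (\<forall>S. S \<subseteq> H_J \<longrightarrow> 0 \<le> PH t S)
     \<and> PH t {0} = PH t {1} \<and> exp (- 2 * t) \<le> PH t {} + PH t {1}
     \<and> (\<forall>u\<in>J. ee u t = 0) \<and> (\<forall>p\<in>EE. 0 \<le> DD p t)"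

lemma contPH: "S \<subseteq> H_J \<Longrightarrow> continuous_on {0..1} (\<lambda>t. PH t S)"
  by (rule mp_cont[OF H])

lemma cont_gb: "continuous_on {0..1} gb"
proof -
  have "continuous_on {0..1} (\<lambda>t. 1 - PH t {0, 1})" by (intro continuous_intros contPH HJsub)
  then show ?thesis by (simp add: gb_eq[abs_def])
qed

lemma cont_gp: "continuous_on {0..1} (gp u v)"
proof -
  have "continuous_on {0..1} (\<lambda>t. 1 - both_matched J P t u v)"
    by (intro continuous_intros integ_cont[OF integ_bm])
  then show ?thesis by (simp add: gp_def[abs_def])
qed

lemma cont_ee: "continuous_on {0..1} (ee u)"
proof -
  have "continuous_on {0..1} (\<lambda>t. pp u t - (PH t {} + PH t {1}))"
    by (intro continuous_intros integ_cont[OF integ_pp] contPH HJsub)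
  then show ?thesis by (simp add: ee_def[abs_def])
qed

lemma cont_DD: "continuous_on {0..1} (DD p)"
proof -
  have "continuous_on {0..1} (\<lambda>t. gp (fst p) (snd p) t - gb t)"
    by (intro continuous_intros cont_gp cont_gb)
  then show ?thesis by (simp add: DD_def[abs_def])
qed

lemma cont_MM: "continuous_on {0..1} MM"
proof -
  have "continuous_on {0..1} (\<lambda>t. \<Sum>q\<in>EE. max 0 (- DD q t))"
    by (intro continuous_intros cont_DD)
  then show ?thesis by (simp add: MM_def[abs_def])
qed

lemma cont_ES: "continuous_on {0..1} ES"
proof -
  have "continuous_on {0..1} (\<lambda>t. \<Sum>w\<in>J. \<bar>ee w t\<bar>)"
    by (intro continuous_intros cont_ee)
  then show ?thesis by (simp add: ES_def[abs_def])
qed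

lemma integ_ee: "integ (ee u) (\<lambda>s. gen J rG P (\<lambda>S. if u \<notin> S then 1 else 0) s
    - (- PH s {} * (2 * c1 t0 s) + (PH s {} * c1 t0 s - PH s {1} * cc t0 s)))"
proof -
  have "integ (\<lambda>t. pp u t - (PH t {} + PH t {1})) (\<lambda>s. gen J rG P (\<lambda>S. if u \<notin> S then 1 else 0) s
    - (- PH s {} * (2 * c1 t0 s) + (PH s {} * c1 t0 s - PH s {1} * cc t0 s)))"
    by (intro integ_diff integ_add integ_pp Hint0 Hintb)
  then show ?thesis by (rule integ_cong) (auto simp: ee_def)
qed

lemma integ_DD:
  assumes "p = (u, v)"
  shows "integ (DD p) (\<lambda>s. cc t0 s * (PH s {0} + PH s {1}) - gen J rG P (\<lambda>S. if u \<in> S \<and> v \<in> S then 1 else 0) s)"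
proof -
  have "integ (\<lambda>t. PH t {0, 1} - both_matched J P t u v) (\<lambda>s. cc t0 s * (PH s {0} + PH s {1}) - gen J rG P (\<lambda>S. if u \<in> S \<and> v \<in> S then 1 else 0) s)"
    by (intro integ_diff Hint2 integ_bm)
  then show ?thesis by (rule integ_cong) (auto simp: DD_def gp_def gb_eq assms)
qed

lemma integ_hd: "integ (\<lambda>t. PH t {0} - PH t {1}) (\<lambda>s. - cc t0 s * (PH s {0} - PH s {1}))"
proof -
  have "integ (\<lambda>t. PH t {0} - PH t {1}) (\<lambda>s. (PH s {} * c1 t0 s - PH s {0} * cc t0 s) - (PH s {} * c1 t0 s - PH s {1} * cc t0 s))"
    by (intro integ_diff Hinta Hintb)
  then show ?thesis by (rule integ_cong) (auto simp: algebra_simps)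
qed

lemma integ_he: "integ (\<lambda>t. PH t {} + PH t {1} - exp (- 2 * t))
   (\<lambda>s. - PH s {} * c1 t0 s - PH s {1} * cc t0 s + 2 * exp (- 2 * s))"
proof -
  have "integ (\<lambda>t. PH t {} + PH t {1} - exp (- 2 * t))
     (\<lambda>s. - PH s {} * (2 * c1 t0 s) + (PH s {} * c1 t0 s - PH s {1} * cc t0 s) - (- 2 * exp (- 2 * s)))"
    by (intro integ_diff integ_add Hint0 Hintb integ_exp)
  then show ?thesis by (rule integ_cong) (auto simp: algebra_simps)
qed

lemma InvD:
  assumes "Inv t"
  shows "\<And>S. S \<subseteq> J \<Longrightarrow> 0 \<le> P t S" "\<And>S. S \<subseteq> H_J \<Longrightarrow> 0 \<le> PH t S" "PH t {0} = PH t {1}"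
    "exp (- 2 * t) \<le> PH t {} + PH t {1}" "\<And>u. u \<in> J \<Longrightarrow> ee u t = 0" "\<And>p. p \<in> EE \<Longrightarrow> 0 \<le> DD p t"
  using assms unfolding Inv_def by auto

end

context setting begin

lemma step:
  assumes tau: "0 \<le> \<tau>" "\<tau> \<le> \<tau>'" "\<tau>' \<le> 1" and inv: "Inv \<tau>"
    and uc: "\<And>q s. q \<in> EE \<Longrightarrow> s \<in> {\<tau>..\<tau>'} \<Longrightarrow> \<bar>gp (fst q) (snd q) s - gp (fst q) (snd q) \<tau>\<bar> < c0"
    and K1: "real (card J) * (1 + 2 / c0) * (\<tau>' - \<tau>) < 1"
    and K2: "real (card EE) * (2 / c0) * (\<tau>' - \<tau>) < 1"
  shows "\<And>t. t \<in> {\<tau>..\<tau>'} \<Longrightarrow> Inv t"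
proof -
  have win: "s \<in> {0..1}" if "s \<in> {\<tau>..\<tau>'}" for s using that tau by auto
  note I0 = InvD[OF inv]
  have low: "c0 \<le> gp (fst q) (snd q) s" if q: "q \<in> EE" and s: "s \<in> {\<tau>..\<tau>'}" for q s
  proof -
    have "gb \<tau> \<le> gp (fst q) (snd q) \<tau>" using I0(6)[OF q] by (simp add: DD_def)
    moreover have "gb \<tau> = PH \<tau> {} + PH \<tau> {0} + PH \<tau> {1}" using gb_H tau by auto
    moreover have "0 \<le> PH \<tau> {0}" using I0(2)[OF HJsub(2)] .
    moreover have "exp (- 2) \<le> exp (- 2 * \<tau>)" using tau by simp
    moreover have "2 * c0 = exp (- 2)" by (simp add: c0_def)
    ultimately have "2 * c0 \<le> gp (fst q) (snd q) \<tau>" using I0(4) by linarith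
    then show ?thesis using uc[OF q s] by linarith
  qed
  have PHnn: "0 \<le> PH s S" if "s \<in> {\<tau>..\<tau>'}" "S \<subseteq> H_J" for s S
    by (rule mp_nonneg[OF H finHJ tau RES_nonneg I0(2) that])
  have gb0: "0 \<le> gb s" if s: "s \<in> {\<tau>..\<tau>'}" for s
    using PHnn[OF s HJsub(1)] PHnn[OF s HJsub(2)] PHnn[OF s HJsub(3)] gb_H[OF win[OF s]] by auto
  have Pnn: "0 \<le> P s S" if "s \<in> {\<tau>..\<tau>'}" "S \<subseteq> J" for s S
  proof (rule mp_nonneg[OF GEN finJ tau _ I0(1) that])
    fix s S w assume s: "s \<in> {\<tau>..\<tau>'}"
    show "0 \<le> rG s S w"
    proof (rule rate_nonneg[OF gb0[OF s]])
      fix i assume i: "i \<in> IN w"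
      have ii: "i \<in> I" "card (N i) = 2" "w \<in> N i" using i IN_card(1)[OF i] by (auto simp: IN_def)
      show "0 < gp w (oth i w) s" using low[OF oth(5)[OF ii] s] c0_pos by simp
    qed
  qed
  have hab: "PH t {0} = PH t {1}" if t: "t \<in> {\<tau>..\<tau>'}" for t
  proof -
    have a: "- integral {\<tau>..t} (\<lambda>_. 0) \<le> PH t {0} - PH t {1}"
    proof (rule exit_lemma[OF integ_hd])
      fix s assume "s \<in> {\<tau>..t}" and le: "PH s {0} - PH s {1} \<le> 0"
      have "cc t0 s * (PH s {0} - PH s {1}) \<le> 0" by (rule mult_nonneg_nonpos[OF cc_bounds(1) le])
      then show "- 0 \<le> - cc t0 s * (PH s {0} - PH s {1})" by simp
    qed (use t tau I0(3) in auto)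
    have b: "- integral {\<tau>..t} (\<lambda>_. 0) \<le> (-1) * (PH t {0} - PH t {1})"
    proof (rule exit_lemma[OF integ_cmul[OF integ_hd]])
      fix s assume "s \<in> {\<tau>..t}" and le: "(-1) * (PH s {0} - PH s {1}) \<le> 0"
      have "0 \<le> cc t0 s * (PH s {0} - PH s {1})" using le by (intro mult_nonneg_nonneg[OF cc_bounds(1)]) simp
      then show "- 0 \<le> (-1) * (- cc t0 s * (PH s {0} - PH s {1}))" by simp
    qed (use t tau I0(3) in auto)
    show ?thesis using a b by simp
  qed
  have hexp: "exp (- 2 * t) \<le> PH t {} + PH t {1}" if t: "t \<in> {\<tau>..\<tau>'}" for t
  proof -
    have "- integral {\<tau>..t} (\<lambda>_. 0) \<le> PH t {} + PH t {1} - exp (- 2 * t)"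
    proof (rule exit_lemma[OF integ_he])
      fix s assume s: "s \<in> {\<tau>..t}" and le: "PH s {} + PH s {1} - exp (- 2 * s) \<le> 0"
      have sw: "s \<in> {\<tau>..\<tau>'}" using s t by auto
      have h0: "0 \<le> PH s {}" "0 \<le> PH s {1}" using PHnn[OF sw HJsub(1)] PHnn[OF sw HJsub(3)] by auto
      have "PH s {} * c1 t0 s \<le> PH s {} * 2" using h0 c1_bounds(2) by (intro mult_left_mono) auto
      moreover have "PH s {1} * cc t0 s \<le> PH s {1} * 2" using h0 cc_bounds(2) by (intro mult_left_mono) auto
      ultimately show "- 0 \<le> - PH s {} * c1 t0 s - PH s {1} * cc t0 s + 2 * exp (- 2 * s)"
        using le by simp
    qed (use t tau I0(4) in auto)
    then show ?thesis by simp
  qed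
  \<comment> \<open>W5: the marginals of GEN agree with H\<close>
  define K5 where "K5 = 1 + 2 / c0"
  have K5: "0 \<le> K5" using c0_pos by (simp add: K5_def)
  have ESi: "ES integrable_on {\<tau>..t}" if "t \<in> {\<tau>..\<tau>'}" for t
    by (rule integrable_continuous_real, rule continuous_on_subset[OF cont_ES]) (use that tau in auto)
  have eeb: "\<bar>ee u t\<bar> \<le> K5 * integral {\<tau>..t} ES" if u: "u \<in> J" and t: "t \<in> {\<tau>..\<tau>'}" for u t
  proof -
    define phi where "phi s = gen J rG P (\<lambda>S. if u \<notin> S then 1 else 0) s
      - (- PH s {} * (2 * c1 t0 s) + (PH s {} * c1 t0 s - PH s {1} * cc t0 s))" for s
    have ip: "(phi has_integral (ee u t - ee u \<tau>)) {\<tau>..t}"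
      using integD[OF integ_ee[of u], of \<tau> t] t tau by (simp add: phi_def[abs_def])
    have ik: "((\<lambda>s. K5 * ES s) has_integral (K5 * integral {\<tau>..t} ES)) {\<tau>..t}"
      by (intro has_integral_mult_right integrable_integral ESi t)
    have pb: "\<bar>phi s\<bar> \<le> K5 * ES s" if s: "s \<in> {\<tau>..t}" for s
    proof -
      have sw: "s \<in> {\<tau>..\<tau>'}" using s t by auto
      show ?thesis unfolding phi_def K5_def
        by (rule ee_rate[OF u win[OF sw] PHnn[OF sw] hab[OF sw] low[OF _ sw]])
    qed
    have "ee u t - ee u \<tau> \<le> K5 * integral {\<tau>..t} ES"
      by (rule has_integral_le[OF ip ik]) (use pb in force)
    moreover have "- (ee u t - ee u \<tau>) \<le> K5 * integral {\<tau>..t} ES"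
      by (rule has_integral_le[OF has_integral_neg[OF ip] ik]) (use pb in force)
    ultimately show ?thesis using I0(5)[OF u] by simp
  qed
  have ES0: "ES t = 0" if t: "t \<in> {\<tau>..\<tau>'}" for t
  proof (rule gronwall0[OF tau(2) _ _ _ _ _ t])
    show "continuous_on {\<tau>..\<tau>'} ES" by (rule continuous_on_subset[OF cont_ES]) (use tau in auto)
    show "\<And>t. t \<in> {\<tau>..\<tau>'} \<Longrightarrow> 0 \<le> ES t" by (auto simp: ES_def intro: sum_nonneg)
    show "0 \<le> real (card J) * K5" using K5 by simp
    show "real (card J) * K5 * (\<tau>' - \<tau>) < 1" using K1 by (simp add: K5_def)
    fix t assume t: "t \<in> {\<tau>..\<tau>'}"
    have "ES t = (\<Sum>w\<in>J. \<bar>ee w t\<bar>)" by (simp only: ES_def)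
    also have "\<dots> \<le> (\<Sum>w\<in>J. K5 * integral {\<tau>..t} ES)" by (rule sum_mono) (rule eeb[OF _ t])
    also have "\<dots> = real (card J) * K5 * integral {\<tau>..t} ES" by simp
    finally show "ES t \<le> real (card J) * K5 * integral {\<tau>..t} ES" .
  qed
  have ee0: "ee u t = 0" if "u \<in> J" "t \<in> {\<tau>..\<tau>'}" for u t
  proof -
    have "(\<Sum>w\<in>J. \<bar>ee w t\<bar>) = 0" using ES0[OF that(2)] by (simp add: ES_def)
    then have "\<forall>w\<in>J. \<bar>ee w t\<bar> = 0" using finJ by (subst (asm) sum_nonneg_eq_0_iff) auto
    then show ?thesis using that by auto
  qed
  have MMi: "MM integrable_on {\<tau>..t}" if "t \<in> {\<tau>..\<tau>'}" for t
    by (rule integrable_continuous_real, rule continuous_on_subset[OF cont_MM]) (use that tau in auto)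
  have Db: "max 0 (- DD p t) \<le> 2 / c0 * integral {\<tau>..t} MM" if p: "p \<in> EE" and t: "t \<in> {\<tau>..\<tau>'}" for p t
  proof -
    obtain u v where uv: "p = (u, v)" by (cases p)
    have "- integral {\<tau>..t} (\<lambda>s. 2 / c0 * MM s) \<le> DD p t"
    proof (rule exit_lemma[OF integ_DD[OF uv]])
      show "0 \<le> \<tau>" "\<tau> \<le> t" "t \<le> 1" using t tau by auto
      show "0 \<le> DD p \<tau>" using I0(6)[OF p] .
      show "\<And>s. s \<in> {\<tau>..t} \<Longrightarrow> 0 \<le> 2 / c0 * MM s" using c0_pos MM_nonneg by simp
      show "continuous_on {\<tau>..t} (\<lambda>s. 2 / c0 * MM s)"
        by (intro continuous_intros continuous_on_subset[OF cont_MM]) (use t tau in auto)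
      fix s assume s: "s \<in> {\<tau>..t}" and Dle: "DD p s \<le> 0"
      have sw: "s \<in> {\<tau>..\<tau>'}" using s t by auto
      show "- (2 / c0 * MM s) \<le> cc t0 s * (PH s {0} + PH s {1}) - gen J rG P (\<lambda>S. if u \<in> S \<and> v \<in> S then 1 else 0) s"
        by (rule DD_rate[OF p[unfolded uv] win[OF sw] Pnn[OF sw] PHnn[OF sw] hab[OF sw] ee0[OF _ sw] low[OF _ sw]])
           (assumption | rule Dle[unfolded uv])+
    qed
    moreover have "0 \<le> integral {\<tau>..t} MM"
      by (rule integral_nonneg[OF MMi[OF t]]) (simp add: MM_nonneg)
    ultimately show ?thesis using c0_pos by simp
  qed
  have MM0: "MM t = 0" if t: "t \<in> {\<tau>..\<tau>'}" for t
  proof (rule gronwall0[OF tau(2) _ _ _ _ _ t])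
    show "continuous_on {\<tau>..\<tau>'} MM" by (rule continuous_on_subset[OF cont_MM]) (use tau in auto)
    show "\<And>t. t \<in> {\<tau>..\<tau>'} \<Longrightarrow> 0 \<le> MM t" by (rule MM_nonneg)
    show "0 \<le> real (card EE) * (2 / c0)" using c0_pos by simp
    show "real (card EE) * (2 / c0) * (\<tau>' - \<tau>) < 1" using K2 .
    fix t assume t: "t \<in> {\<tau>..\<tau>'}"
    have "MM t = (\<Sum>q\<in>EE. max 0 (- DD q t))" by (simp only: MM_def)
    also have "\<dots> \<le> (\<Sum>q\<in>EE. 2 / c0 * integral {\<tau>..t} MM)" by (rule sum_mono) (rule Db[OF _ t])
    also have "\<dots> = real (card EE) * (2 / c0) * integral {\<tau>..t} MM" by simp
    finally show "MM t \<le> real (card EE) * (2 / c0) * integral {\<tau>..t} MM" .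
  qed
  have DD0: "0 \<le> DD p t" if "p \<in> EE" "t \<in> {\<tau>..\<tau>'}" for p t
  proof -
    have "max 0 (- DD p t) \<le> MM t" by (rule MM_ge[OF that(1)])
    then show ?thesis using MM0[OF that(2)] by simp
  qed
  fix t assume t: "t \<in> {\<tau>..\<tau>'}"
  show "Inv t" unfolding Inv_def
    using Pnn[OF t] PHnn[OF t] hab[OF t] hexp[OF t] ee0[OF _ t] DD0[OF _ t] by blast
qed

end

lemma unif_family:
  fixes f :: "'a \<Rightarrow> real \<Rightarrow> real"
  assumes "finite A" "\<And>a. a \<in> A \<Longrightarrow> continuous_on {0..1} (f a)" "0 < e"
  shows "\<exists>d>0. \<forall>a\<in>A. \<forall>s\<in>{0..1}. \<forall>t\<in>{0..1}. \<bar>s - t\<bar> < d \<longrightarrow> \<bar>f a s - f a t\<bar> < e"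
  using assms
proof (induction A rule: finite_induct)
  case empty
  then show ?case by (intro exI[of _ 1]) auto
next
  case (insert a A)
  obtain d1 where d1: "d1 > 0" "\<forall>a\<in>A. \<forall>s\<in>{0..1}. \<forall>t\<in>{0..1}. \<bar>s - t\<bar> < d1 \<longrightarrow> \<bar>f a s - f a t\<bar> < e"
    using insert by auto
  have "uniformly_continuous_on {0..1} (f a)"
    by (rule compact_uniformly_continuous) (use insert in auto)
  then obtain d2 where d2: "d2 > 0" "\<forall>x\<in>{0..1}. \<forall>x'\<in>{0..1}. dist x' x < d2 \<longrightarrow> dist (f a x') (f a x) < e"
    using insert(5) unfolding uniformly_continuous_on_def by metis
  show ?case
  proof (intro exI[of _ "min d1 d2"] conjI ballI impI)
    show "0 < min d1 d2" using d1 d2 by simp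
    fix b s t assume b: "b \<in> insert a A" and s: "s \<in> {0..1}" and t: "t \<in> {0..1}" and st: "\<bar>s - t\<bar> < min d1 d2"
    show "\<bar>f b s - f b t\<bar> < e"
    proof (cases "b = a")
      case True
      then show ?thesis using d2(2) s t st by (auto simp: dist_real_def)
    next
      case False
      then show ?thesis using d1(2) b s t st by auto
    qed
  qed
qed

context setting begin

lemma Inv0: "Inv 0"
proof -
  have pp0: "pp u 0 = 1" for u
  proof -
    have "pp u 0 = (\<Sum>S\<in>Pow J. if S = {} then 1 else 0)"
      unfolding pp_eq by (rule sum.cong) (auto simp: G0)
    also have "\<dots> = 1" using finJ by simp
    finally show ?thesis .
  qed
  have bm0: "both_matched J P 0 u v = 0" for u v
    unfolding bm_eq by (rule sum.neutral) (auto simp: G0)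
  show ?thesis unfolding Inv_def
    using mp_P0[OF H] G0 H0 pp0 bm0
    by (auto simp: ee_def DD_def gp_def gb_eq)
qed

lemma Inv_all: assumes t01: "t \<in> {0..1}" shows "Inv t"
proof -
  obtain d where d: "d > 0" "\<forall>q\<in>EE. \<forall>s\<in>{0..1}. \<forall>t\<in>{0..1}. \<bar>s - t\<bar> < d \<longrightarrow>
      \<bar>gp (fst q) (snd q) s - gp (fst q) (snd q) t\<bar> < c0"
    using unif_family[OF EE_fin, of "\<lambda>q. gp (fst q) (snd q)" c0] cont_gp c0_pos by blast
  define A1 where "A1 = real (card J) * (1 + 2 / c0)"
  define A2 where "A2 = real (card EE) * (2 / c0)"
  have A: "0 \<le> A1" "0 \<le> A2" using c0_pos by (auto simp: A1_def A2_def)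
  define h where "h = min (d / 2) (1 / (A1 + A2 + 1))"
  have h: "0 < h" "h < d" using d A by (auto simp: h_def)
  have hA1: "A1 * h < 1" and hA2: "A2 * h < 1"
  proof -
    have "h \<le> 1 / (A1 + A2 + 1)" by (simp add: h_def)
    then have "A1 * h \<le> A1 * (1 / (A1 + A2 + 1))" "A2 * h \<le> A2 * (1 / (A1 + A2 + 1))"
      using A by (simp_all only: mult_left_mono)
    moreover have "A1 * (1 / (A1 + A2 + 1)) < 1" "A2 * (1 / (A1 + A2 + 1)) < 1"
      using A by (auto simp: field_simps)
    ultimately show "A1 * h < 1" "A2 * h < 1" by linarith+
  qed
  have ind: "\<forall>t\<in>{0..min 1 (real n * h)}. Inv t" for n
  proof (induction n)
    case 0
    then show ?case using Inv0 by auto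
  next
    case (Suc n)
    define \<tau> where "\<tau> = min 1 (real n * h)"
    define \<tau>' where "\<tau>' = min 1 (real (Suc n) * h)"
    have tau: "0 \<le> \<tau>" "\<tau> \<le> \<tau>'" "\<tau>' \<le> 1" "\<tau>' - \<tau> \<le> h"
      using h by (auto simp: \<tau>_def \<tau>'_def min_def algebra_simps)
    have invt: "Inv \<tau>" using Suc.IH tau(1) by (auto simp: \<tau>_def)
    have st: "\<And>t. t \<in> {\<tau>..\<tau>'} \<Longrightarrow> Inv t"
    proof (rule step[OF tau(1-3) invt])
      fix q s assume q: "q \<in> EE" and s: "s \<in> {\<tau>..\<tau>'}"
      have "\<bar>s - \<tau>\<bar> < d" using s tau h by auto
      then show "\<bar>gp (fst q) (snd q) s - gp (fst q) (snd q) \<tau>\<bar> < c0"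
        using d(2) q s tau by auto
    next
      have "A1 * (\<tau>' - \<tau>) \<le> A1 * h" using A tau by (intro mult_left_mono) auto
      then show "real (card J) * (1 + 2 / c0) * (\<tau>' - \<tau>) < 1" using hA1 by (simp add: A1_def)
    next
      have "A2 * (\<tau>' - \<tau>) \<le> A2 * h" using A tau by (intro mult_left_mono) auto
      then show "real (card EE) * (2 / c0) * (\<tau>' - \<tau>) < 1" using hA2 by (simp add: A2_def)
    qed
    show ?case
    proof
      fix t assume t: "t \<in> {0..min 1 (real (Suc n) * h)}"
      show "Inv t"
      proof (cases "t \<le> \<tau>")
        case True then show ?thesis using Suc.IH t by (auto simp: \<tau>_def)
      next
        case False then show ?thesis using st t by (auto simp: \<tau>'_def)
      qed
    qed
  qed
  obtain n where n: "1 / h < real n" using reals_Archimedean2 by blast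
  then have "1 \<le> real n * h" using h by (simp add: field_simps)
  then have "min 1 (real n * h) = 1" by simp
  show "Inv t" using t01 ind[of n] \<open>min 1 (real n * h) = 1\<close> by auto
qed

end

theorem claim4p2:
  fixes I :: "'i set" and J :: "'j set" and N :: "'i \<Rightarrow> 'j set"
    and lam :: "'i \<Rightarrow> real" and x :: "'i \<Rightarrow> 'j \<Rightarrow> real" and lab :: "'i \<Rightarrow> 'j \<Rightarrow> bool"
    and t0 t :: real and PH :: "real \<Rightarrow> nat set \<Rightarrow> real" and P :: "real \<Rightarrow> 'j set \<Rightarrow> real"
    and i :: 'i and u v :: 'j
  assumes inst: "standing_instance I J N lam x"
    and lab: "valid_labeling I J N x lab"
    and t0: "0 \<le> t0" "t0 \<le> 1"
    and H: "matched_process H_J (RES_rate H_I H_N H_lam t0) PH"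
    and GEN: "matched_process J
               (GEN_rate I J N lam lab t0 (\<lambda>s. 1 - both_matched H_J PH s 0 1) P) P"
    and i: "i \<in> I" "card (N i) = 2" "N i = {u, v}"
    and t: "t \<in> {0..1}"
  shows "(1 - both_matched H_J PH t 0 1) / (1 - both_matched J P t u v) \<le> 1"
proof -
  interpret setting I J N lam x lab t0 PH P
    by (rule setting.intro) (fact inst lab t0 H GEN)+
  have inv: "Inv t" by (rule Inv_all[OF t])
  have p: "(u, v) \<in> EE" using i unfolding EE_def by blast
  have D: "gb t \<le> gp u v t" using InvD(6)[OF inv p] by (simp add: DD_def)
  have "0 < exp (- 2 * t)" by simp
  moreover have "exp (- 2 * t) \<le> PH t {} + PH t {1}" by (rule InvD(4)[OF inv])
  moreover have "0 \<le> PH t {0}" by (rule InvD(2)[OF inv HJsub(2)])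
  moreover have "gb t = PH t {} + PH t {0} + PH t {1}" by (rule gb_H[OF t])
  ultimately have pos: "0 < gb t" by linarith
  have "gb t / gp u v t \<le> 1" using D pos by simp
  then show ?thesis by (simp add: gb_def gp_def)
qed

end
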